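(* Let $\varphi=\nu\tilde n.\sigma$ be a frame well-formed with respect to $\mathtt{s}\in\tilde n$ such that $\varphi\nvdash\mathtt{s}$. Let $U$ be a term with all variables in $\mathrm{dom}(\varphi)$ and $M$ a closed term in normal form, such that $U$ and $M$ are public with respect to $\varphi$. If $U\sigma[\mathtt{s}/M]\rightarrow V$ for some term $V$, then there exists a frame $\varphi'=\nu\tilde n.\sigma'$ well-formed with respect to $\mathtt{s}$ such that: $x\sigma'=x\sigma$ for all $x\in\mathrm{dom}(\sigma)$; for every term $W$, $\varphi\vdash W$ iff $\varphi'\vdash W$; and $V=V'\sigma'[\mathtt{s}/M]$ and $U\sigma\rightarrow V'\sigma'$ for some term $V'$ public with respect to $\varphi'$.
   Context: Terms over $\Sigma=\{\mathsf{enc}/3,\mathsf{dec}/2,\mathsf{enca}/3,\mathsf{deca}/2,\mathsf{pub}/1,\mathsf{priv}/1,\langle\cdot,\cdot\rangle/2,\pi_1/1,\pi_2/1,\mathsf{sign}/2,\mathsf{check}/3,\mathsf{retrieve}/1\}$, constants (including $\mathsf{ok}$), names and variables; destructors are $\pi_1,\pi_2,\mathsf{dec},\mathsf{deca},\mathsf{check},\mathsf{retrieve}$. The rewrite system $\mathcal R_E$ consists of $\pi_i(\langle z_1,z_2\rangle)\to z_i$ ($i=1,2$), $\mathsf{dec}(\mathsf{enc}(z_1,z_2,z_3),z_2)\to z_1$, $\mathsf{deca}(\mathsf{enca}(z_1,\mathsf{pub}(z_2),z_3),\mathsf{priv}(z_2))\to z_1$, $\mathsf{check}(z_1,\mathsf{sign}(z_1,\mathsf{priv}(z_2)),\mathsf{pub}(z_2))\to\mathsf{ok}$,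 $\mathsf{retrieve}(\mathsf{sign}(z_1,z_2))\to z_1$; it is convergent, $=_E$ is its induced equality, and $U\to V$ denotes one rewrite step at some position. A frame $\varphi=\nu\tilde n.\sigma$: finite set of restricted names $\tilde n$ and acyclic substitution $\sigma$. Public term w.r.t. $\varphi$: contains no name of $\tilde n$ and no $\mathsf{priv}$. $\varphi\vdash M$: least relation containing $x\sigma$ ($x\in\mathrm{dom}(\sigma)$) and names outside $\tilde n$, closed under applying symbols other than $\mathsf{priv}$ and under $=_E$. $T[\mathtt{s}/M]$ replaces each occurrence of $\mathtt{s}$ by $M$. Positions are sequences of positive integers, $T|_p$ the subterm at $p$. An encryption occurrence $q$ in $U$ (head of $U|_q$ in $\{\mathsf{enc},\mathsf{enca}\}$) is an agent encryption w.r.t. names $\tilde m$ if $U|_{q\cdot3}\in\tilde m$, and a probabilistic encryption w.r.t. a set of terms $S$ if for all $V\in S$ and $p$ with $V|_p=U|_{q\cdot3}$, $p=q'\cdot3$ with $V|_{q'}=U|_q$. $\varphi$ is well-formed w.r.t. $\mathtt{s}$ if (1) every encryption in $\sigma$ is an agent encryption w.r.t. $\tilde n\setminus\{\mathtt{s}\}$ and a probabilistic encryption w.r.t. $\mathrm{ran}(\sigma)$; (2) for all subterms $\mathsf{enc}(M,K,R)$, $\mathsf{enca}(M',K',R')$, $\mathsf{sign}(U,V)$, $\mathsf{pub}(W)$, $\mathsf{priv}(W')$ of $\varphi$, $\mathtt{s}$ does not occur in $K,K',V,W,W',R,R'$; (3) $\varphi$ contains no destructor. *)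

theory Defs
  imports Main
begin

type_synonym name = nat
type_synonym var = nat

datatype trm =
    Var var | Nm name | Cst string
  | Enc trm trm trm | Dec trm trm | Enca trm trm trm | Deca trm trm
  | Pub trm | Priv trm | Pair trm trm | Pi1 trm | Pi2 trm
  | Sign trm trm | Check trm trm trm | Retrieve trm

definition ok :: trm where "ok = Cst ''ok''"

fun args :: "trm \<Rightarrow> trm list" where
  "args (Enc a b c) = [a,b,c]"
| "args (Dec a b) = [a,b]"
| "args (Enca a b c) = [a,b,c]"
| "args (Deca a b) = [a,b]"
| "args (Pub a) = [a]"
| "args (Priv a) = [a]"
| "args (Pair a b) = [a,b]"
| "args (Pi1 a) = [a]"
| "args (Pi2 a) = [a]"
| "args (Sign a b) = [a,b]"
| "args (Check a b c) = [a,b,c]"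
| "args (Retrieve a) = [a]"
| "args _ = []"

fun set_args :: "trm \<Rightarrow> trm list \<Rightarrow> trm" where
  "set_args (Enc _ _ _) [a,b,c] = Enc a b c"
| "set_args (Dec _ _) [a,b] = Dec a b"
| "set_args (Enca _ _ _) [a,b,c] = Enca a b c"
| "set_args (Deca _ _) [a,b] = Deca a b"
| "set_args (Pub _) [a] = Pub a"
| "set_args (Priv _) [a] = Priv a"
| "set_args (Pair _ _) [a,b] = Pair a b"
| "set_args (Pi1 _) [a] = Pi1 a"
| "set_args (Pi2 _) [a] = Pi2 a"
| "set_args (Sign _ _) [a,b] = Sign a b"
| "set_args (Check _ _ _) [a,b,c] = Check a b c"
| "set_args (Retrieve _) [a] = Retrieve a"
| "set_args t _ = t"

text \<open>Positions are lists of positive integers; \<open>subterm_at T p = Some (T|_p)\<close>.\<close>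
primrec subterm_at :: "trm \<Rightarrow> nat list \<Rightarrow> trm option" where
  "subterm_at t [] = Some t"
| "subterm_at t (i # p) =
     (if 0 < i \<and> i \<le> length (args t) then subterm_at (args t ! (i - 1)) p else None)"

primrec replace_at :: "trm \<Rightarrow> nat list \<Rightarrow> trm \<Rightarrow> trm" where
  "replace_at t [] u = u"
| "replace_at t (i # p) u =
     (if 0 < i \<and> i \<le> length (args t)
      then set_args t ((args t)[i - 1 := replace_at (args t ! (i - 1)) p u])
      else t)"

definition subterms :: "trm \<Rightarrow> trm set" where
  "subterms t = {u. \<exists>p. subterm_at t p = Some u}"

definition vars :: "trm \<Rightarrow> var set" where
  "vars t = {x. Var x \<in> subterms t}"

definition names :: "trm \<Rightarrow> name set" where
  "names t = {n. Nm n \<in> subterms t}"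

definition is_destructor :: "trm \<Rightarrow> bool" where
  "is_destructor t \<longleftrightarrow> (case t of Dec _ _ \<Rightarrow> True | Deca _ _ \<Rightarrow> True | Pi1 _ \<Rightarrow> True
      | Pi2 _ \<Rightarrow> True | Check _ _ _ \<Rightarrow> True | Retrieve _ \<Rightarrow> True | _ \<Rightarrow> False)"

definition is_encryption :: "trm \<Rightarrow> bool" where
  "is_encryption t \<longleftrightarrow> (case t of Enc _ _ _ \<Rightarrow> True | Enca _ _ _ \<Rightarrow> True | _ \<Rightarrow> False)"

definition closed :: "trm \<Rightarrow> bool" where
  "closed t \<longleftrightarrow> vars t = {}"

inductive rroot :: "trm \<Rightarrow> trm \<Rightarrow> bool" where
  "rroot (Pi1 (Pair z1 z2)) z1"
| "rroot (Pi2 (Pair z1 z2)) z2"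
| "rroot (Dec (Enc z1 z2 z3) z2) z1"
| "rroot (Deca (Enca z1 (Pub z2) z3) (Priv z2)) z1"
| "rroot (Check z1 (Sign z1 (Priv z2)) (Pub z2)) ok"
| "rroot (Retrieve (Sign z1 z2)) z1"

definition rstep :: "trm \<Rightarrow> trm \<Rightarrow> bool" where
  "rstep U V \<longleftrightarrow> (\<exists>p l r. subterm_at U p = Some l \<and> rroot l r \<and> V = replace_at U p r)"

definition eqE :: "trm \<Rightarrow> trm \<Rightarrow> bool" where
  "eqE = (sup rstep rstep\<inverse>\<inverse>)\<^sup>*\<^sup>*"

definition normal_form :: "trm \<Rightarrow> bool" where
  "normal_form t \<longleftrightarrow> \<not> (\<exists>u. rstep t u)"

type_synonym subst = "var \<rightharpoonup> trm"

primrec subst1 :: "subst \<Rightarrow> trm \<Rightarrow> trm" where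
  "subst1 \<sigma> (Var x) = (case \<sigma> x of Some u \<Rightarrow> u | None \<Rightarrow> Var x)"
| "subst1 \<sigma> (Nm n) = Nm n"
| "subst1 \<sigma> (Cst c) = Cst c"
| "subst1 \<sigma> (Enc a b c) = Enc (subst1 \<sigma> a) (subst1 \<sigma> b) (subst1 \<sigma> c)"
| "subst1 \<sigma> (Dec a b) = Dec (subst1 \<sigma> a) (subst1 \<sigma> b)"
| "subst1 \<sigma> (Enca a b c) = Enca (subst1 \<sigma> a) (subst1 \<sigma> b) (subst1 \<sigma> c)"
| "subst1 \<sigma> (Deca a b) = Deca (subst1 \<sigma> a) (subst1 \<sigma> b)"
| "subst1 \<sigma> (Pub a) = Pub (subst1 \<sigma> a)"
| "subst1 \<sigma> (Priv a) = Priv (subst1 \<sigma> a)"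
| "subst1 \<sigma> (Pair a b) = Pair (subst1 \<sigma> a) (subst1 \<sigma> b)"
| "subst1 \<sigma> (Pi1 a) = Pi1 (subst1 \<sigma> a)"
| "subst1 \<sigma> (Pi2 a) = Pi2 (subst1 \<sigma> a)"
| "subst1 \<sigma> (Sign a b) = Sign (subst1 \<sigma> a) (subst1 \<sigma> b)"
| "subst1 \<sigma> (Check a b c) = Check (subst1 \<sigma> a) (subst1 \<sigma> b) (subst1 \<sigma> c)"
| "subst1 \<sigma> (Retrieve a) = Retrieve (subst1 \<sigma> a)"

text \<open>Application \<open>T\<sigma>\<close> of an acyclic substitution: iterate the one-step application
  \<open>card (dom \<sigma>)\<close> times, which resolves every chain of an acyclic substitution.\<close>
definition app :: "subst \<Rightarrow> trm \<Rightarrow> trm" where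
  "app \<sigma> t = (subst1 \<sigma> ^^ card (dom \<sigma>)) t"

primrec repl :: "name \<Rightarrow> trm \<Rightarrow> trm \<Rightarrow> trm" where
  "repl s M (Var x) = Var x"
| "repl s M (Nm n) = (if n = s then M else Nm n)"
| "repl s M (Cst c) = Cst c"
| "repl s M (Enc a b c) = Enc (repl s M a) (repl s M b) (repl s M c)"
| "repl s M (Dec a b) = Dec (repl s M a) (repl s M b)"
| "repl s M (Enca a b c) = Enca (repl s M a) (repl s M b) (repl s M c)"
| "repl s M (Deca a b) = Deca (repl s M a) (repl s M b)"
| "repl s M (Pub a) = Pub (repl s M a)"
| "repl s M (Priv a) = Priv (repl s M a)"
| "repl s M (Pair a b) = Pair (repl s M a) (repl s M b)"
| "repl s M (Pi1 a) = Pi1 (repl s M a)"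
| "repl s M (Pi2 a) = Pi2 (repl s M a)"
| "repl s M (Sign a b) = Sign (repl s M a) (repl s M b)"
| "repl s M (Check a b c) = Check (repl s M a) (repl s M b) (repl s M c)"
| "repl s M (Retrieve a) = Retrieve (repl s M a)"

text \<open>A frame \<open>\<nu>\<tilde>n.\<sigma>\<close> is a pair (restricted names, substitution).\<close>
type_synonym frame = "name set \<times> subst"

definition is_frame :: "frame \<Rightarrow> bool" where
  "is_frame \<phi> \<longleftrightarrow> finite (fst \<phi>) \<and> finite (dom (snd \<phi>)) \<and>
     acyclic {(x, y). x \<in> dom (snd \<phi>) \<and> y \<in> vars (the (snd \<phi> x))}"

definition public :: "frame \<Rightarrow> trm \<Rightarrow> bool" where
  "public \<phi> t \<longleftrightarrow> names t \<inter> fst \<phi> = {} \<and> (\<forall>u. Priv u \<notin> subterms t)"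

inductive ded :: "frame \<Rightarrow> trm \<Rightarrow> bool" where
  ded_var: "x \<in> dom (snd \<phi>) \<Longrightarrow> ded \<phi> (app (snd \<phi>) (Var x))"
| ded_name: "n \<notin> fst \<phi> \<Longrightarrow> ded \<phi> (Nm n)"
| ded_cst: "ded \<phi> (Cst c)"
| ded_enc: "ded \<phi> a \<Longrightarrow> ded \<phi> b \<Longrightarrow> ded \<phi> c \<Longrightarrow> ded \<phi> (Enc a b c)"
| ded_dec: "ded \<phi> a \<Longrightarrow> ded \<phi> b \<Longrightarrow> ded \<phi> (Dec a b)"
| ded_enca: "ded \<phi> a \<Longrightarrow> ded \<phi> b \<Longrightarrow> ded \<phi> c \<Longrightarrow> ded \<phi> (Enca a b c)"
| ded_deca: "ded \<phi> a \<Longrightarrow> ded \<phi> b \<Longrightarrow> ded \<phi> (Deca a b)"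
| ded_pub: "ded \<phi> a \<Longrightarrow> ded \<phi> (Pub a)"
| ded_pair: "ded \<phi> a \<Longrightarrow> ded \<phi> b \<Longrightarrow> ded \<phi> (Pair a b)"
| ded_pi1: "ded \<phi> a \<Longrightarrow> ded \<phi> (Pi1 a)"
| ded_pi2: "ded \<phi> a \<Longrightarrow> ded \<phi> (Pi2 a)"
| ded_sign: "ded \<phi> a \<Longrightarrow> ded \<phi> b \<Longrightarrow> ded \<phi> (Sign a b)"
| ded_check: "ded \<phi> a \<Longrightarrow> ded \<phi> b \<Longrightarrow> ded \<phi> c \<Longrightarrow> ded \<phi> (Check a b c)"
| ded_retrieve: "ded \<phi> a \<Longrightarrow> ded \<phi> (Retrieve a)"
| ded_eq: "ded \<phi> a \<Longrightarrow> eqE a b \<Longrightarrow> ded \<phi> b"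

definition enc_occ :: "trm \<Rightarrow> nat list \<Rightarrow> bool" where
  "enc_occ U q \<longleftrightarrow> (\<exists>t. subterm_at U q = Some t \<and> is_encryption t)"

definition agent_enc :: "name set \<Rightarrow> trm \<Rightarrow> nat list \<Rightarrow> bool" where
  "agent_enc m U q \<longleftrightarrow> (\<exists>n \<in> m. subterm_at U (q @ [3]) = Some (Nm n))"

definition prob_enc :: "trm set \<Rightarrow> trm \<Rightarrow> nat list \<Rightarrow> bool" where
  "prob_enc S U q \<longleftrightarrow> (\<forall>V \<in> S. \<forall>p. subterm_at V p = subterm_at U (q @ [3]) \<longrightarrow>
      (\<exists>q'. p = q' @ [3] \<and> subterm_at V q' = subterm_at U q))"

definition frame_subterms :: "frame \<Rightarrow> trm set" where
  "frame_subterms \<phi> = (\<Union>t \<in> ran (snd \<phi>). subterms t)"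

definition well_formed :: "frame \<Rightarrow> name \<Rightarrow> bool" where
  "well_formed \<phi> s \<longleftrightarrow>
     (\<forall>U \<in> ran (snd \<phi>). \<forall>q. enc_occ U q \<longrightarrow>
         agent_enc (fst \<phi> - {s}) U q \<and> prob_enc (ran (snd \<phi>)) U q) \<and>
     (\<forall>t \<in> frame_subterms \<phi>.
         (\<forall>M K R. t = Enc M K R \<longrightarrow> s \<notin> names K \<and> s \<notin> names R) \<and>
         (\<forall>M K R. t = Enca M K R \<longrightarrow> s \<notin> names K \<and> s \<notin> names R) \<and>
         (\<forall>U V. t = Sign U V \<longrightarrow> s \<notin> names V) \<and>
         (\<forall>W. t = Pub W \<longrightarrow> s \<notin> names W) \<and>
         (\<forall>W. t = Priv W \<longrightarrow> s \<notin> names W)) \<and>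
     (\<forall>t \<in> frame_subterms \<phi>. \<not> is_destructor t)"

end

theory Submission
  imports Defs
begin


primrec sub :: "trm \<Rightarrow> trm set" where
  "sub (Var x) = {Var x}"
| "sub (Nm n) = {Nm n}"
| "sub (Cst c) = {Cst c}"
| "sub (Enc a b c) = insert (Enc a b c) (sub a \<union> sub b \<union> sub c)"
| "sub (Dec a b) = insert (Dec a b) (sub a \<union> sub b)"
| "sub (Enca a b c) = insert (Enca a b c) (sub a \<union> sub b \<union> sub c)"
| "sub (Deca a b) = insert (Deca a b) (sub a \<union> sub b)"
| "sub (Pub a) = insert (Pub a) (sub a)"
| "sub (Priv a) = insert (Priv a) (sub a)"
| "sub (Pair a b) = insert (Pair a b) (sub a \<union> sub b)"
| "sub (Pi1 a) = insert (Pi1 a) (sub a)"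
| "sub (Pi2 a) = insert (Pi2 a) (sub a)"
| "sub (Sign a b) = insert (Sign a b) (sub a \<union> sub b)"
| "sub (Check a b c) = insert (Check a b c) (sub a \<union> sub b \<union> sub c)"
| "sub (Retrieve a) = insert (Retrieve a) (sub a)"

lemma sub_args: "sub t = insert t (\<Union>a\<in>set (args t). sub a)"
  by (cases t) auto

lemma args_size: "a \<in> set (args t) \<Longrightarrow> size a < size t"
  by (cases t) auto

lemma self_sub[simp]: "t \<in> sub t" by (cases t) auto

lemma subterm_at_sub: "subterm_at t p = Some u \<Longrightarrow> u \<in> sub t"
proof (induction p arbitrary: t)
  case Nil then show ?case by simp
next
  case (Cons i p)
  then have c: "0 < i \<and> i \<le> length (args t)" and s: "subterm_at (args t ! (i - 1)) p = Some u"
    by (auto split: if_splits)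
  have "args t ! (i - 1) \<in> set (args t)" using c by auto
  with Cons.IH[OF s] show ?case by (subst sub_args) auto
qed

lemma sub_subterm_at: "u \<in> sub t \<Longrightarrow> \<exists>p. subterm_at t p = Some u"
proof (induction t rule: measure_induct_rule[of size])
  case (less t)
  show ?case
  proof (cases "u = t")
    case True then show ?thesis by (intro exI[of _ "[]"]) simp
  next
    case False
    with less.prems obtain a where a: "a \<in> set (args t)" "u \<in> sub a"
      by (subst (asm) sub_args) auto
    then obtain j where j: "j < length (args t)" "a = args t ! j" by (auto simp: in_set_conv_nth)
    from less.IH[OF args_size[OF a(1)] a(2)] obtain p where "subterm_at a p = Some u" by blast
    then have "subterm_at t (Suc j # p) = Some u" using j by simp
    then show ?thesis by blast
  qed
qed

lemma subterms_sub: "subterms t = sub t"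
  unfolding subterms_def using subterm_at_sub sub_subterm_at by blast

lemma names_sub: "names t = {n. Nm n \<in> sub t}"
  unfolding names_def subterms_sub ..

lemma vars_sub: "vars t = {x. Var x \<in> sub t}"
  unfolding vars_def subterms_sub ..

lemma subterm_at_append:
  "subterm_at t (p @ q) = (case subterm_at t p of None \<Rightarrow> None | Some u \<Rightarrow> subterm_at u q)"
  by (induction p arbitrary: t) auto

lemma sub_trans: "u \<in> sub t \<Longrightarrow> v \<in> sub u \<Longrightarrow> v \<in> sub t"
  by (induction t) auto

lemma finite_sub: "finite (sub t)"
  by (induction t) auto

lemma finite_vars: "finite (vars t)"
proof -
  have "vars t = Var -` sub t" by (auto simp: vars_sub)
  moreover have "inj Var" by (auto simp: inj_def)
  ultimately show ?thesis using finite_vimageI[OF finite_sub] by simp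
qed

lemma subterm_at_size: "subterm_at t (i # p) = Some u \<Longrightarrow> size u < size t"
proof -
  assume a: "subterm_at t (i # p) = Some u"
  then have c: "0 < i \<and> i \<le> length (args t)" and s: "subterm_at (args t ! (i - 1)) p = Some u"
    by (auto split: if_splits)
  have m: "args t ! (i - 1) \<in> set (args t)" using c by auto
  have "u \<in> sub (args t ! (i - 1))" using subterm_at_sub[OF s] .
  moreover have "\<And>v w. v \<in> sub w \<Longrightarrow> size v \<le> size w"
  proof -
    fix v w show "v \<in> sub w \<Longrightarrow> size v \<le> size w" by (induction w) auto
  qed
  ultimately show ?thesis using args_size[OF m] by fastforce
qed



lemma fp_hom:
  "(subst1 \<sigma> ^^ j) (Nm n) = Nm n \<and> (subst1 \<sigma> ^^ j) (Cst c) = Cst c \<and>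
   (subst1 \<sigma> ^^ j) (Enc a b d) = Enc ((subst1 \<sigma> ^^ j) a) ((subst1 \<sigma> ^^ j) b) ((subst1 \<sigma> ^^ j) d) \<and>
   (subst1 \<sigma> ^^ j) (Dec a b) = Dec ((subst1 \<sigma> ^^ j) a) ((subst1 \<sigma> ^^ j) b) \<and>
   (subst1 \<sigma> ^^ j) (Enca a b d) = Enca ((subst1 \<sigma> ^^ j) a) ((subst1 \<sigma> ^^ j) b) ((subst1 \<sigma> ^^ j) d) \<and>
   (subst1 \<sigma> ^^ j) (Deca a b) = Deca ((subst1 \<sigma> ^^ j) a) ((subst1 \<sigma> ^^ j) b) \<and>
   (subst1 \<sigma> ^^ j) (Pub a) = Pub ((subst1 \<sigma> ^^ j) a) \<and>
   (subst1 \<sigma> ^^ j) (Priv a) = Priv ((subst1 \<sigma> ^^ j) a) \<and>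
   (subst1 \<sigma> ^^ j) (Pair a b) = Pair ((subst1 \<sigma> ^^ j) a) ((subst1 \<sigma> ^^ j) b) \<and>
   (subst1 \<sigma> ^^ j) (Pi1 a) = Pi1 ((subst1 \<sigma> ^^ j) a) \<and>
   (subst1 \<sigma> ^^ j) (Pi2 a) = Pi2 ((subst1 \<sigma> ^^ j) a) \<and>
   (subst1 \<sigma> ^^ j) (Sign a b) = Sign ((subst1 \<sigma> ^^ j) a) ((subst1 \<sigma> ^^ j) b) \<and>
   (subst1 \<sigma> ^^ j) (Check a b d) = Check ((subst1 \<sigma> ^^ j) a) ((subst1 \<sigma> ^^ j) b) ((subst1 \<sigma> ^^ j) d) \<and>
   (subst1 \<sigma> ^^ j) (Retrieve a) = Retrieve ((subst1 \<sigma> ^^ j) a)"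
  by (induction j) auto

lemma app_hom:
  "app \<sigma> (Nm n) = Nm n" "app \<sigma> (Cst c) = Cst c"
  "app \<sigma> (Enc a b d) = Enc (app \<sigma> a) (app \<sigma> b) (app \<sigma> d)"
  "app \<sigma> (Dec a b) = Dec (app \<sigma> a) (app \<sigma> b)"
  "app \<sigma> (Enca a b d) = Enca (app \<sigma> a) (app \<sigma> b) (app \<sigma> d)"
  "app \<sigma> (Deca a b) = Deca (app \<sigma> a) (app \<sigma> b)"
  "app \<sigma> (Pub a) = Pub (app \<sigma> a)"
  "app \<sigma> (Priv a) = Priv (app \<sigma> a)"
  "app \<sigma> (Pair a b) = Pair (app \<sigma> a) (app \<sigma> b)"
  "app \<sigma> (Pi1 a) = Pi1 (app \<sigma> a)"
  "app \<sigma> (Pi2 a) = Pi2 (app \<sigma> a)"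
  "app \<sigma> (Sign a b) = Sign (app \<sigma> a) (app \<sigma> b)"
  "app \<sigma> (Check a b d) = Check (app \<sigma> a) (app \<sigma> b) (app \<sigma> d)"
  "app \<sigma> (Retrieve a) = Retrieve (app \<sigma> a)"
  unfolding app_def by (simp_all add: fp_hom)

lemma fp_args: "args t \<noteq> [] \<Longrightarrow> (subst1 \<sigma> ^^ j) t = set_args t (map (subst1 \<sigma> ^^ j) (args t))"
  by (cases t) (auto simp: fp_hom)

lemma app_args: "args t \<noteq> [] \<Longrightarrow> app \<sigma> t = set_args t (map (app \<sigma>) (args t))"
  by (cases t) (auto simp: app_hom)

lemma args_app: "(\<forall>x. t \<noteq> Var x) \<Longrightarrow> args (app \<sigma> t) = map (app \<sigma>) (args t)"
  by (cases t) (auto simp: app_hom)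

lemma repl_args: "args t \<noteq> [] \<Longrightarrow> repl s M t = set_args t (map (repl s M) (args t))"
  by (cases t) auto

lemma args_repl: "t \<noteq> Nm s \<Longrightarrow> args (repl s M t) = map (repl s M) (args t)"
  by (cases t) auto

lemma args_set_args: "length xs = length (args t) \<Longrightarrow> args (set_args t xs) = xs"
  by (cases t) (auto simp: length_Suc_conv)

lemma set_args_set_args: "length ys = length (args t) \<Longrightarrow> length xs = length (args t) \<Longrightarrow>
   set_args (set_args t ys) xs = set_args t xs"
  by (cases t) (auto simp: length_Suc_conv)

lemma set_args_self: "set_args t (args t) = t"
  by (cases t) auto

lemma set_args_repl: "t \<noteq> Nm s \<Longrightarrow> length xs = length (args t) \<Longrightarrow> set_args (repl s M t) xs = set_args t xs"
  by (cases t) (auto simp: length_Suc_conv)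

lemma isd_set_args: "length xs = length (args t) \<Longrightarrow> is_destructor (set_args t xs) = is_destructor t"
  by (cases t) (auto simp: length_Suc_conv is_destructor_def)

lemma isd_repl: "t \<noteq> Nm s \<Longrightarrow> is_destructor (repl s M t) = is_destructor t"
  by (cases t) (auto simp: is_destructor_def)

lemma sub_set_args: "length xs = length (args t) \<Longrightarrow>
   sub (set_args t xs) = insert (set_args t xs) (\<Union>a\<in>set xs. sub a)"
  by (subst sub_args) (simp add: args_set_args)

lemma rroot_destr: "rroot l r \<Longrightarrow> is_destructor l"
  by (induction rule: rroot.induct) (auto simp: is_destructor_def)

lemma rroot_args: "rroot l r \<Longrightarrow> r = ok \<or> (\<exists>a \<in> set (args l). r \<in> set (args a))"
  by (induction rule: rroot.induct) auto

lemma rstep_char: "rstep t V \<longleftrightarrow> rroot t V \<or>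
   (\<exists>i<length (args t). \<exists>a'. rstep (args t ! i) a' \<and> V = set_args t ((args t)[i := a']))"
proof
  assume "rstep t V"
  then obtain p l r where h: "subterm_at t p = Some l" "rroot l r" "V = replace_at t p r"
    unfolding rstep_def by blast
  show "rroot t V \<or> (\<exists>i<length (args t). \<exists>a'. rstep (args t ! i) a' \<and> V = set_args t ((args t)[i := a']))"
  proof (cases p)
    case Nil then show ?thesis using h by simp
  next
    case (Cons j p')
    with h have c: "0 < j \<and> j \<le> length (args t)" by (auto split: if_splits)
    with h Cons have "subterm_at (args t ! (j - 1)) p' = Some l" by simp
    then have "rstep (args t ! (j - 1)) (replace_at (args t ! (j - 1)) p' r)"
      unfolding rstep_def using h by blast
    moreover have "V = set_args t ((args t)[j - 1 := replace_at (args t ! (j - 1)) p' r])"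
      using h Cons c by simp
    ultimately show ?thesis using c by (intro disjI2 exI[of _ "j - 1"]) auto
  qed
next
  assume "rroot t V \<or> (\<exists>i<length (args t). \<exists>a'. rstep (args t ! i) a' \<and> V = set_args t ((args t)[i := a']))"
  then show "rstep t V"
  proof
    assume "rroot t V" then show ?thesis unfolding rstep_def
      by (intro exI[of _ "[]"]) auto
  next
    assume "\<exists>i<length (args t). \<exists>a'. rstep (args t ! i) a' \<and> V = set_args t ((args t)[i := a'])"
    then obtain i a' where i: "i < length (args t)" "rstep (args t ! i) a'" "V = set_args t ((args t)[i := a'])"
      by blast
    then obtain p l r where h: "subterm_at (args t ! i) p = Some l" "rroot l r" "a' = replace_at (args t ! i) p r"
      unfolding rstep_def by blast
    show ?thesis unfolding rstep_def
      by (intro exI[of _ "Suc i # p"] exI[of _ l] exI[of _ r]) (use i h in auto)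
  qed
qed

lemma rstep_arg: "i < length (args t) \<Longrightarrow> rstep (args t ! i) a' \<Longrightarrow> rstep t (set_args t ((args t)[i := a']))"
  using rstep_char by blast

lemma nf_no_root: "normal_form M \<Longrightarrow> \<not> rroot M r"
  unfolding normal_form_def using rstep_char by blast

lemma destr_free_nf:
  assumes "\<forall>u\<in>sub t. \<not> is_destructor u" "normal_form M"
  shows "\<not> rstep (repl s M t) V"
  using assms(1)
proof (induction t arbitrary: V rule: measure_induct_rule[of size])
  case (less t)
  show ?case
  proof (cases "t = Nm s")
    case True then show ?thesis using assms(2) unfolding normal_form_def by simp
  next
    case False
    show ?thesis
    proof
      assume "rstep (repl s M t) V"
      then consider "rroot (repl s M t) V"
        | i a' where "i < length (args (repl s M t))" "rstep (args (repl s M t) ! i) a'"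
        using rstep_char by blast
      then show False
      proof cases
        case 1
        then have "is_destructor t" using rroot_destr isd_repl[OF False] by metis
        then show False using less.prems by simp
      next
        case 2
        then have i: "i < length (args t)" "rstep (repl s M (args t ! i)) a'"
          using args_repl[OF False] by auto
        have m: "args t ! i \<in> set (args t)" using i by simp
        have "\<forall>u\<in>sub (args t ! i). \<not> is_destructor u" using less.prems m
          by (subst (asm) sub_args) auto
        then show False using less.IH[OF args_size[OF m]] i(2) by blast
      qed
    qed
  qed
qed



lemma vars_simps[simp]:
  "vars (Var x) = {x}" "vars (Nm n) = {}" "vars (Cst c) = {}"
  "vars (Enc a b d) = vars a \<union> vars b \<union> vars d"
  "vars (Dec a b) = vars a \<union> vars b"
  "vars (Enca a b d) = vars a \<union> vars b \<union> vars d"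
  "vars (Deca a b) = vars a \<union> vars b"
  "vars (Pub a) = vars a" "vars (Priv a) = vars a"
  "vars (Pair a b) = vars a \<union> vars b"
  "vars (Pi1 a) = vars a" "vars (Pi2 a) = vars a"
  "vars (Sign a b) = vars a \<union> vars b"
  "vars (Check a b d) = vars a \<union> vars b \<union> vars d"
  "vars (Retrieve a) = vars a"
  by (auto simp: vars_sub)

lemma names_simps[simp]:
  "names (Var x) = {}" "names (Nm n) = {n}" "names (Cst c) = {}"
  "names (Enc a b d) = names a \<union> names b \<union> names d"
  "names (Dec a b) = names a \<union> names b"
  "names (Enca a b d) = names a \<union> names b \<union> names d"
  "names (Deca a b) = names a \<union> names b"
  "names (Pub a) = names a" "names (Priv a) = names a"
  "names (Pair a b) = names a \<union> names b"
  "names (Pi1 a) = names a" "names (Pi2 a) = names a"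
  "names (Sign a b) = names a \<union> names b"
  "names (Check a b d) = names a \<union> names b \<union> names d"
  "names (Retrieve a) = names a"
  by (auto simp: names_sub)

lemma vars_subst1_eq: "vars (subst1 \<sigma> t) = (\<Union>x\<in>vars t. case \<sigma> x of None \<Rightarrow> {x} | Some v \<Rightarrow> vars v)"
  by (induction t) (auto split: option.splits)

lemma subst1_id: "vars t \<inter> dom \<sigma> = {} \<Longrightarrow> subst1 \<sigma> t = t"
  by (induction t) (auto split: option.splits)

lemma vars_subst1: "y \<in> vars (subst1 \<sigma> t) \<Longrightarrow>
   \<exists>x\<in>vars t. (\<sigma> x = None \<and> y = x) \<or> (\<exists>v. \<sigma> x = Some v \<and> y \<in> vars v)"
proof -
  assume "y \<in> vars (subst1 \<sigma> t)"
  then obtain x where x: "x \<in> vars t" "y \<in> (case \<sigma> x of None \<Rightarrow> {x} | Some v \<Rightarrow> vars v)"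
    unfolding vars_subst1_eq by blast
  show ?thesis
  proof (cases "\<sigma> x")
    case None then show ?thesis using x by (intro bexI[OF _ x(1)]) simp
  next
    case (Some v) then show ?thesis using x by (intro bexI[OF _ x(1)]) simp
  qed
qed



definition Rel :: "subst \<Rightarrow> (var \<times> var) set" where
  "Rel \<sigma> = {(x, y). x \<in> dom \<sigma> \<and> y \<in> vars (the (\<sigma> x))}"

lemma path_lemma: "y \<in> vars ((subst1 \<sigma> ^^ j) t) \<Longrightarrow> y \<in> dom \<sigma> \<Longrightarrow> \<exists>x\<in>vars t. (x, y) \<in> (Rel \<sigma>) ^^ j"
proof (induction j arbitrary: y)
  case 0 then show ?case by auto
next
  case (Suc j)
  from Suc.prems(1) have "y \<in> vars (subst1 \<sigma> ((subst1 \<sigma> ^^ j) t))" by simp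
  from vars_subst1[OF this] obtain x' where x': "x' \<in> vars ((subst1 \<sigma> ^^ j) t)"
    "(\<sigma> x' = None \<and> y = x') \<or> (\<exists>v. \<sigma> x' = Some v \<and> y \<in> vars v)" by blast
  then obtain v where v: "\<sigma> x' = Some v" "y \<in> vars v" using Suc.prems(2) by auto
  then have "x' \<in> dom \<sigma>" "(x', y) \<in> Rel \<sigma>" unfolding Rel_def by auto
  with Suc.IH[OF x'(1)] show ?case by (meson relpow_Suc_I)
qed



lemma pigeon_cycle:
  assumes "acyclic R" "finite D" "Domain R \<subseteq> D" "(x, y) \<in> R ^^ (card D)" "y \<in> D"
  shows False
proof -
  let ?k = "card D"
  obtain g where g: "g 0 = x" "g ?k = y" "\<forall>i<?k. (g i, g (Suc i)) \<in> R"
    using assms(4) unfolding relpow_fun_conv by blast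
  have img: "g ` {0..?k} \<subseteq> D"
  proof
    fix z assume "z \<in> g ` {0..?k}"
    then obtain i where i: "i \<le> ?k" "z = g i" by auto
    show "z \<in> D"
    proof (cases "i < ?k")
      case True then have "g i \<in> Domain R" using g(3) by blast
      then show ?thesis using assms(3) i by auto
    next
      case False then have "i = ?k" using i by simp
      then show ?thesis using i g(2) assms(5) by simp
    qed
  qed
  have "\<not> inj_on g {0..?k}"
  proof
    assume "inj_on g {0..?k}"
    from card_inj_on_le[OF this img assms(2)] show False by simp
  qed
  then obtain a b where ab: "a \<le> ?k" "b \<le> ?k" "a \<noteq> b" "g a = g b"
    unfolding inj_on_def by auto
  define i where "i = min a b"
  define j where "j = max a b"
  have ij: "i \<le> ?k" "j \<le> ?k" "i < j" "g i = g j"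
    using ab unfolding i_def j_def by (auto simp: min_def max_def)
  have tr: "\<And>d. i + Suc d \<le> ?k \<Longrightarrow> (g i, g (i + Suc d)) \<in> R\<^sup>+"
  proof -
    fix d show "i + Suc d \<le> ?k \<Longrightarrow> (g i, g (i + Suc d)) \<in> R\<^sup>+"
    proof (induction d)
      case 0 then show ?case using g(3) by auto
    next
      case (Suc d)
      then have "(g i, g (i + Suc d)) \<in> R\<^sup>+" by simp
      moreover have "(g (i + Suc d), g (Suc (i + Suc d))) \<in> R" using g(3) Suc.prems by auto
      ultimately show ?case by (simp add: trancl_into_trancl)
    qed
  qed
  have "j = i + Suc (j - i - 1)" using ij by simp
  then have "(g i, g j) \<in> R\<^sup>+" using tr[of "j - i - 1"] ij by simp
  then show False using ij(4) assms(1) unfolding acyclic_def by simp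
qed



lemma is_frameD: "is_frame (n, \<sigma>) \<Longrightarrow> finite (dom \<sigma>) \<and> acyclic (Rel \<sigma>)"
  unfolding is_frame_def Rel_def by simp

lemma app_nodom: "is_frame (n, \<sigma>) \<Longrightarrow> vars (app \<sigma> t) \<inter> dom \<sigma> = {}"
proof (rule ccontr)
  assume fr: "is_frame (n, \<sigma>)" and "vars (app \<sigma> t) \<inter> dom \<sigma> \<noteq> {}"
  then obtain y where y: "y \<in> vars ((subst1 \<sigma> ^^ card (dom \<sigma>)) t)" "y \<in> dom \<sigma>"
    unfolding app_def by auto
  from path_lemma[OF y] obtain x where "(x, y) \<in> Rel \<sigma> ^^ card (dom \<sigma>)" by blast
  moreover have "Domain (Rel \<sigma>) \<subseteq> dom \<sigma>" unfolding Rel_def by auto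
  ultimately show False using pigeon_cycle[of "Rel \<sigma>" "dom \<sigma>" x y] is_frameD[OF fr] y(2) by simp
qed

lemma app_fix: "is_frame (n, \<sigma>) \<Longrightarrow> subst1 \<sigma> (app \<sigma> t) = app \<sigma> t"
  using subst1_id app_nodom by blast

lemma fp_app_fix: "is_frame (n, \<sigma>) \<Longrightarrow> (subst1 \<sigma> ^^ m) (app \<sigma> t) = app \<sigma> t"
  by (induction m) (auto simp: app_fix)

lemma app_fp: "is_frame (n, \<sigma>) \<Longrightarrow> app \<sigma> ((subst1 \<sigma> ^^ i) t) = app \<sigma> t"
proof -
  assume fr: "is_frame (n, \<sigma>)"
  have "app \<sigma> ((subst1 \<sigma> ^^ i) t) = (subst1 \<sigma> ^^ i) (app \<sigma> t)"
  proof -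
    have "(subst1 \<sigma> ^^ card (dom \<sigma>)) ((subst1 \<sigma> ^^ i) t) = (subst1 \<sigma> ^^ (card (dom \<sigma>) + i)) t"
      by (simp add: funpow_add)
    also have "\<dots> = (subst1 \<sigma> ^^ (i + card (dom \<sigma>))) t" by (simp add: add.commute)
    also have "\<dots> = (subst1 \<sigma> ^^ i) ((subst1 \<sigma> ^^ card (dom \<sigma>)) t)" by (simp add: funpow_add)
    finally show ?thesis unfolding app_def .
  qed
  also have "\<dots> = app \<sigma> t" using fp_app_fix[OF fr] .
  finally show ?thesis .
qed

lemma app_Var_notdom: "x \<notin> dom \<sigma> \<Longrightarrow> app \<sigma> (Var x) = Var x"
proof -
  assume "x \<notin> dom \<sigma>"
  then have "(subst1 \<sigma> ^^ j) (Var x) = Var x" for j by (induction j) (auto split: option.splits)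
  then show ?thesis unfolding app_def by simp
qed

lemma app_Var_dom: "is_frame (n, \<sigma>) \<Longrightarrow> \<sigma> x = Some v \<Longrightarrow> app \<sigma> (Var x) = app \<sigma> v"
proof -
  assume fr: "is_frame (n, \<sigma>)" and v: "\<sigma> x = Some v"
  have "(subst1 \<sigma> ^^ 1) (Var x) = v" using v by simp
  then show ?thesis using app_fp[OF fr, of 1 "Var x"] by simp
qed



lemma public_iff: "public \<phi> t \<longleftrightarrow> names t \<inter> fst \<phi> = {} \<and> (\<forall>u\<in>sub t. \<forall>x. u \<noteq> Priv x)"
  unfolding public_def subterms_sub by auto

lemma public_simps[simp]:
  "public \<phi> (Var x)" "public \<phi> (Nm m) \<longleftrightarrow> m \<notin> fst \<phi>" "public \<phi> (Cst c)"
  "public \<phi> (Enc a b d) \<longleftrightarrow> public \<phi> a \<and> public \<phi> b \<and> public \<phi> d"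
  "public \<phi> (Dec a b) \<longleftrightarrow> public \<phi> a \<and> public \<phi> b"
  "public \<phi> (Enca a b d) \<longleftrightarrow> public \<phi> a \<and> public \<phi> b \<and> public \<phi> d"
  "public \<phi> (Deca a b) \<longleftrightarrow> public \<phi> a \<and> public \<phi> b"
  "public \<phi> (Pub a) \<longleftrightarrow> public \<phi> a" "\<not> public \<phi> (Priv a)"
  "public \<phi> (Pair a b) \<longleftrightarrow> public \<phi> a \<and> public \<phi> b"
  "public \<phi> (Pi1 a) \<longleftrightarrow> public \<phi> a" "public \<phi> (Pi2 a) \<longleftrightarrow> public \<phi> a"
  "public \<phi> (Sign a b) \<longleftrightarrow> public \<phi> a \<and> public \<phi> b"
  "public \<phi> (Check a b d) \<longleftrightarrow> public \<phi> a \<and> public \<phi> b \<and> public \<phi> d"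
  "public \<phi> (Retrieve a) \<longleftrightarrow> public \<phi> a"
  by (auto simp: public_iff)

lemma sub_arg: "a \<in> set (args t) \<Longrightarrow> sub a \<subseteq> sub t"
  by (subst (2) sub_args) auto

lemma names_arg: "a \<in> set (args t) \<Longrightarrow> names a \<subseteq> names t"
  using sub_arg unfolding names_sub by blast

lemma vars_arg: "a \<in> set (args t) \<Longrightarrow> vars a \<subseteq> vars t"
  using sub_arg unfolding vars_sub by blast

lemma public_arg: "public \<phi> t \<Longrightarrow> a \<in> set (args t) \<Longrightarrow> public \<phi> a"
  using sub_arg names_arg unfolding public_iff by blast

lemma rroot_eqE: "rroot l r \<Longrightarrow> eqE l r"
proof -
  assume "rroot l r"
  then have "rstep l r" using rstep_char by blast
  then show ?thesis unfolding eqE_def by auto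
qed

lemma ded_proj:
  "ded \<phi> (Pair a b) \<Longrightarrow> ded \<phi> a" "ded \<phi> (Pair a b) \<Longrightarrow> ded \<phi> b"
  "ded \<phi> (Sign a b) \<Longrightarrow> ded \<phi> a"
proof -
  show "ded \<phi> (Pair a b) \<Longrightarrow> ded \<phi> a"
    using ded_eq[OF ded_pi1 rroot_eqE[OF rroot.intros(1)]] by blast
  show "ded \<phi> (Pair a b) \<Longrightarrow> ded \<phi> b"
    using ded_eq[OF ded_pi2 rroot_eqE[OF rroot.intros(2)]] by blast
  show "ded \<phi> (Sign a b) \<Longrightarrow> ded \<phi> a"
    using ded_eq[OF ded_retrieve rroot_eqE[OF rroot.intros(6)]] by blast
qed

lemma fs_iff: "w \<in> frame_subterms \<phi> \<longleftrightarrow> (\<exists>v\<in>ran (snd \<phi>). \<exists>q. subterm_at v q = Some w)"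
  unfolding frame_subterms_def subterms_def by auto

lemma fs_arg: "w \<in> frame_subterms \<phi> \<Longrightarrow> a \<in> set (args w) \<Longrightarrow> a \<in> frame_subterms \<phi>"
proof -
  assume w: "w \<in> frame_subterms \<phi>" and a: "a \<in> set (args w)"
  from w obtain v where v: "v \<in> ran (snd \<phi>)" "w \<in> sub v"
    unfolding frame_subterms_def subterms_sub by blast
  have "a \<in> sub v" using sub_trans[OF v(2)] sub_arg[OF a] self_sub[of a] by blast
  then show ?thesis using v(1) unfolding frame_subterms_def subterms_sub by blast
qed

lemma fs_ran: "\<sigma> x = Some v \<Longrightarrow> v \<in> frame_subterms (n, \<sigma>)"
proof -
  assume "\<sigma> x = Some v"
  then have "v \<in> ran \<sigma>" by (rule ranI)
  then show ?thesis unfolding frame_subterms_def subterms_sub by (auto intro!: bexI[of _ v])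
qed



locale ctx =
  fixes n :: "name set" and \<sigma> :: subst and s :: name and M :: trm
  assumes fr: "is_frame (n, \<sigma>)" and sn: "s \<in> n" and wf: "well_formed (n, \<sigma>) s"
    and nded: "\<not> ded (n, \<sigma>) (Nm s)" and clM: "closed M" and nfM: "normal_form M"
    and pubM: "public (n, \<sigma>) M"
begin

abbreviation "FS \<equiv> frame_subterms (n, \<sigma>)"
abbreviation "ndv w \<equiv> (\<forall>z. w = Var z \<longrightarrow> z \<notin> dom \<sigma>)"

lemma app_app: "app \<sigma> (app \<sigma> t) = app \<sigma> t"
  using fp_app_fix[OF fr] unfolding app_def by simp

lemma unfold_var:
  assumes "y \<in> dom \<sigma>"
  shows "\<exists>y' v. \<sigma> y' = Some v \<and> ndv v \<and> app \<sigma> (Var y) = app \<sigma> v"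
proof -
  have claim: "\<And>y. y \<in> dom \<sigma> \<Longrightarrow> (\<exists>y' v i. \<sigma> y' = Some v \<and> ndv v \<and> i < j \<and>
      (subst1 \<sigma> ^^ j) (Var y) = (subst1 \<sigma> ^^ i) v) \<or> (\<exists>y''\<in>dom \<sigma>. (subst1 \<sigma> ^^ j) (Var y) = Var y'')" for j
  proof (induction j)
    case 0 then show ?case by auto
  next
    case (Suc j)
    obtain v0 where v0: "\<sigma> y = Some v0" using Suc.prems by auto
    have e: "(subst1 \<sigma> ^^ Suc j) (Var y) = (subst1 \<sigma> ^^ j) v0"
      using v0 by (simp add: funpow_Suc_right del: funpow.simps)
    show ?case
    proof (cases "\<exists>y2. v0 = Var y2 \<and> y2 \<in> dom \<sigma>")
      case True
      then obtain y2 where y2: "v0 = Var y2" "y2 \<in> dom \<sigma>" by blast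
      from Suc.IH[OF y2(2)] show ?thesis
      proof
        assume "\<exists>y' v i. \<sigma> y' = Some v \<and> ndv v \<and> i < j \<and> (subst1 \<sigma> ^^ j) (Var y2) = (subst1 \<sigma> ^^ i) v"
        then obtain y' v i where "\<sigma> y' = Some v" "ndv v" "i < j" "(subst1 \<sigma> ^^ j) (Var y2) = (subst1 \<sigma> ^^ i) v"
          by blast
        then show ?thesis using e y2 by (intro disjI1 exI[of _ y'] exI[of _ v] exI[of _ i]) auto
      next
        assume "\<exists>y''\<in>dom \<sigma>. (subst1 \<sigma> ^^ j) (Var y2) = Var y''"
        then show ?thesis using e y2 by auto
      qed
    next
      case False
      then show ?thesis using e v0 by (intro disjI1 exI[of _ y] exI[of _ v0] exI[of _ j]) auto
    qed
  qed
  from claim[OF assms, of "card (dom \<sigma>)"] show ?thesis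
  proof
    assume "\<exists>y' v i. \<sigma> y' = Some v \<and> ndv v \<and> i < card (dom \<sigma>) \<and>
      (subst1 \<sigma> ^^ card (dom \<sigma>)) (Var y) = (subst1 \<sigma> ^^ i) v"
    then obtain y' v i where h: "\<sigma> y' = Some v" "ndv v" "app \<sigma> (Var y) = (subst1 \<sigma> ^^ i) v"
      unfolding app_def by blast
    have "app \<sigma> v = app \<sigma> ((subst1 \<sigma> ^^ i) v)" using app_fp[OF fr] by simp
    also have "\<dots> = app \<sigma> (app \<sigma> (Var y))" using h(3) by simp
    also have "\<dots> = app \<sigma> (Var y)" using app_app .
    finally have "app \<sigma> (Var y) = app \<sigma> v" by simp
    then show ?thesis using h(1,2) by blast
  next
    assume "\<exists>y''\<in>dom \<sigma>. (subst1 \<sigma> ^^ card (dom \<sigma>)) (Var y) = Var y''"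
    then obtain y'' where "y'' \<in> dom \<sigma>" "app \<sigma> (Var y) = Var y''" unfolding app_def by blast
    then show ?thesis using app_nodom[OF fr, of "Var y"] by auto
  qed
qed

lemma app_var_nm: "y \<in> dom \<sigma> \<Longrightarrow> app \<sigma> (Var y) = Nm r \<Longrightarrow> \<exists>y'. \<sigma> y' = Some (Nm r)"
proof -
  assume y: "y \<in> dom \<sigma>" and e: "app \<sigma> (Var y) = Nm r"
  from unfold_var[OF y] obtain y' v where h: "\<sigma> y' = Some v" "ndv v" "app \<sigma> (Var y) = app \<sigma> v" by blast
  then have "app \<sigma> v = Nm r" using e by simp
  then have "v = Nm r" using h(2) by (cases v) (auto simp: app_hom app_Var_notdom)
  then show ?thesis using h by blast
qed

lemma ded_pub: "public (n, \<sigma>) w \<Longrightarrow> vars w \<subseteq> dom \<sigma> \<Longrightarrow> ded (n, \<sigma>) (app \<sigma> w)"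
proof (induction w)
  case (Var x) then show ?case using ded_var[of x "(n, \<sigma>)"] by simp
qed (auto simp: app_hom intro: ded_name ded_cst ded_enc ded_dec ded_enca ded_deca ded_pub
   ded_pair ded_pi1 ded_pi2 ded_sign ded_check ded_retrieve)

definition Rep :: "trm \<Rightarrow> bool" where
  "Rep w \<longleftrightarrow> w \<in> FS \<or> (public (n, \<sigma>) w \<and> vars w \<subseteq> dom \<sigma>)"

definition Cls :: "trm \<Rightarrow> bool" where
  "Cls t \<longleftrightarrow> (\<exists>w. t = app \<sigma> w \<and> Rep w \<and> (ded (n, \<sigma>) t \<or> s \<notin> names w))"

lemma Rep_arg: "Rep w \<Longrightarrow> a \<in> set (args w) \<Longrightarrow> Rep a"
  unfolding Rep_def using fs_arg public_arg vars_arg by blast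

lemma Cls_norm: "Cls t \<Longrightarrow> \<exists>w. t = app \<sigma> w \<and> Rep w \<and> (ded (n, \<sigma>) t \<or> s \<notin> names w) \<and> ndv w"
proof -
  assume "Cls t"
  then obtain w where w: "t = app \<sigma> w" "Rep w" "ded (n, \<sigma>) t \<or> s \<notin> names w" unfolding Cls_def by blast
  show ?thesis
  proof (cases "\<exists>y. w = Var y \<and> y \<in> dom \<sigma>")
    case True
    then obtain y where y: "w = Var y" "y \<in> dom \<sigma>" by blast
    from unfold_var[OF y(2)] obtain y' v where v: "\<sigma> y' = Some v" "ndv v" "app \<sigma> (Var y) = app \<sigma> v" by blast
    have "ded (n, \<sigma>) t" using ded_var[of y "(n, \<sigma>)"] y w by simp
    moreover have "Rep v" unfolding Rep_def using fs_ran[of \<sigma> y' v n, OF v(1)] by simp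
    ultimately show ?thesis using v w y by blast
  next
    case False then show ?thesis using w by blast
  qed
qed

lemma pub_nm: "public (n, \<sigma>) w \<Longrightarrow> w = Nm m \<Longrightarrow> m \<notin> n"
  by simp

lemma Cls_not_s: "Cls t \<Longrightarrow> t \<noteq> Nm s"
proof
  assume "Cls t" "t = Nm s"
  from Cls_norm[OF this(1)] obtain w where w: "t = app \<sigma> w" "Rep w" "ded (n, \<sigma>) t \<or> s \<notin> names w" "ndv w"
    by blast
  have "w = Nm s" using w(1,4) \<open>t = Nm s\<close> by (cases w) (auto simp: app_hom app_Var_notdom)
  then have "\<not> public (n, \<sigma>) w" using sn by simp
  then show False using w \<open>t = Nm s\<close> nded \<open>w = Nm s\<close> by (auto simp: Rep_def)
qed

end

context ctx begin

lemma wf_parts: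
  shows wf_enc: "\<forall>U\<in>ran \<sigma>. \<forall>q. enc_occ U q \<longrightarrow> agent_enc (n - {s}) U q \<and> prob_enc (ran \<sigma>) U q"
    and wf_keys: "\<forall>t\<in>FS.
         (\<forall>M K R. t = Enc M K R \<longrightarrow> s \<notin> names K \<and> s \<notin> names R) \<and>
         (\<forall>M K R. t = Enca M K R \<longrightarrow> s \<notin> names K \<and> s \<notin> names R) \<and>
         (\<forall>U V. t = Sign U V \<longrightarrow> s \<notin> names V) \<and>
         (\<forall>W. t = Pub W \<longrightarrow> s \<notin> names W) \<and>
         (\<forall>W. t = Priv W \<longrightarrow> s \<notin> names W)"
    and wf_nod: "\<forall>t\<in>FS. \<not> is_destructor t"
  using wf unfolding well_formed_def by auto

lemma Cls_arg:
  assumes "Cls t" "i < length (args t)" "\<not> (is_encryption t \<and> i = 0)"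
  shows "Cls (args t ! i)"
proof -
  from Cls_norm[OF assms(1)] obtain w where w: "t = app \<sigma> w" "Rep w" "ded (n, \<sigma>) t \<or> s \<notin> names w" "ndv w"
    by blast
  have nv: "\<forall>z. w \<noteq> Var z"
  proof
    fix z show "w \<noteq> Var z"
    proof
      assume "w = Var z" then have "t = Var z" using w by (simp add: app_Var_notdom)
      then show False using assms(2) by simp
    qed
  qed
  then have at: "args t = map (app \<sigma>) (args w)" using w(1) args_app by simp
  then have il: "i < length (args w)" using assms(2) by simp
  let ?a = "args w ! i"
  have am: "?a \<in> set (args w)" using il by simp
  have ra: "Rep ?a" using Rep_arg[OF w(2) am] .
  have eq: "args t ! i = app \<sigma> ?a" using at il by simp
  have dd: "ded (n, \<sigma>) (app \<sigma> ?a) \<or> s \<notin> names ?a"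
  proof (cases "s \<notin> names w")
    case True then show ?thesis using names_arg[OF am] by blast
  next
    case False
    then have dt: "ded (n, \<sigma>) t" using w(3) by blast
    show ?thesis
    proof (cases "public (n, \<sigma>) w \<and> vars w \<subseteq> dom \<sigma>")
      case True
      then have "public (n, \<sigma>) ?a" "vars ?a \<subseteq> dom \<sigma>"
        using public_arg[OF _ am] vars_arg[OF am] by auto
      then show ?thesis using ded_pub by simp
    next
      case False
      then have fs: "w \<in> FS" using w(2) unfolding Rep_def by auto
      have nd: "\<not> is_destructor w" using bspec[OF wf_nod fs] .
      have ky: "(\<forall>M K R. w = Enc M K R \<longrightarrow> s \<notin> names K \<and> s \<notin> names R) \<and>
         (\<forall>M K R. w = Enca M K R \<longrightarrow> s \<notin> names K \<and> s \<notin> names R) \<and>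
         (\<forall>U V. w = Sign U V \<longrightarrow> s \<notin> names V) \<and>
         (\<forall>W. w = Pub W \<longrightarrow> s \<notin> names W) \<and>
         (\<forall>W. w = Priv W \<longrightarrow> s \<notin> names W)" using bspec[OF wf_keys fs] .
      have ie: "is_encryption t = is_encryption w" using w(1) nv
        by (cases w) (auto simp: app_hom is_encryption_def)
      have i01: "i = 0 \<or> i = 1 \<or> i = 2"
      proof -
        have "length (args w) \<le> 3" by (cases w) auto
        then show ?thesis using il by linarith
      qed
      show ?thesis
      proof (cases w)
        case (Pair x y)
        then have "ded (n, \<sigma>) (app \<sigma> x)" "ded (n, \<sigma>) (app \<sigma> y)"
          using dt w(1) ded_proj(1,2)[of "(n, \<sigma>)" "app \<sigma> x" "app \<sigma> y"] by (simp_all add: app_hom)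
        then show ?thesis using Pair il i01 by auto
      next
        case (Sign x y)
        then have "ded (n, \<sigma>) (app \<sigma> x)" 
          using dt w(1) ded_proj(3)[of "(n, \<sigma>)" "app \<sigma> x" "app \<sigma> y"] by (simp add: app_hom)
        moreover have "s \<notin> names y" using ky Sign by simp
        ultimately show ?thesis using Sign il i01 by auto
      next
        case (Enc x y z)
        then have "s \<notin> names y" "s \<notin> names z" using ky by simp_all
        moreover have "i \<noteq> 0" using assms(3) ie Enc by (simp add: is_encryption_def)
        ultimately show ?thesis using Enc il i01 by auto
      next
        case (Enca x y z)
        then have "s \<notin> names y" "s \<notin> names z" using ky by simp_all
        moreover have "i \<noteq> 0" using assms(3) ie Enca by (simp add: is_encryption_def)
        ultimately show ?thesis using Enca il i01 by auto
      next
        case (Pub x)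
        then have "s \<notin> names x" using ky by simp
        then show ?thesis using Pub il by auto
      next
        case (Priv x)
        then have "s \<notin> names x" using ky by simp
        then show ?thesis using Priv il by auto
      next
        case (Var x) then show ?thesis using nv by simp
      next
        case (Nm x) then show ?thesis using il by simp
      next
        case (Cst x) then show ?thesis using il by simp
      qed (use nd in \<open>simp_all add: is_destructor_def\<close>)
    qed
  qed
  show ?thesis unfolding Cls_def
    by (rule exI[of _ ?a]) (use eq ra dd in simp)
qed

end


lemma repl_same_head:
  assumes "t1 \<noteq> Nm s" "t2 \<noteq> Nm s" "repl s M t1 = repl s M t2"
  shows "length (args t1) = length (args t2) \<and> set_args t1 (args t2) = t2 \<and>
         map (repl s M) (args t1) = map (repl s M) (args t2)"
  using assms by (cases t1; cases t2) auto

lemma repl_nm: "t \<noteq> Nm s \<Longrightarrow> repl s M t = Nm r \<Longrightarrow> t = Nm r"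
  by (cases t) (auto split: if_splits)

lemma ise_set_args: "length xs = length (args t) \<Longrightarrow> is_encryption (set_args t xs) = is_encryption t"
  by (cases t) (auto simp: length_Suc_conv is_encryption_def)

lemma subterm_at_3: "is_encryption w \<Longrightarrow> subterm_at w [3] = Some (args w ! 2) \<and> length (args w) = 3"
  by (cases w) (auto simp: is_encryption_def)

context ctx begin

lemma agent_rand:
  assumes "w \<in> FS" "is_encryption w"
  shows "\<exists>v\<in>ran \<sigma>. \<exists>q r. subterm_at v q = Some w \<and> r \<in> n - {s} \<and> args w ! 2 = Nm r \<and>
     prob_enc (ran \<sigma>) v q \<and> subterm_at v (q @ [3]) = Some (Nm r)"
proof -
  from assms(1) obtain v q where v: "v \<in> ran \<sigma>" "subterm_at v q = Some w"
    unfolding fs_iff by auto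
  have "enc_occ v q" unfolding enc_occ_def using v assms(2) by blast
  then have a: "agent_enc (n - {s}) v q" "prob_enc (ran \<sigma>) v q" using bspec[OF wf_enc v(1)] by auto
  from a(1) obtain r where r: "r \<in> n - {s}" "subterm_at v (q @ [3]) = Some (Nm r)"
    unfolding agent_enc_def by blast
  have "subterm_at v (q @ [3]) = Some (args w ! 2)"
    using subterm_at_3[OF assms(2)] v(2) by (simp add: subterm_at_append)
  then have "args w ! 2 = Nm r" using r by simp
  then show ?thesis using v a r by blast
qed

lemma pubCls: "public (n, \<sigma>) w \<Longrightarrow> vars w \<subseteq> dom \<sigma> \<Longrightarrow> Cls (app \<sigma> w)"
  unfolding Cls_def Rep_def using ded_pub by blast

lemma nonvar_norm: "t = app \<sigma> w \<Longrightarrow> ndv w \<Longrightarrow> args t \<noteq> [] \<Longrightarrow> (\<forall>z. w \<noteq> Var z) \<and> args t = map (app \<sigma>) (args w)"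
proof -
  assume a: "t = app \<sigma> w" "ndv w" "args t \<noteq> []"
  have nv: "\<forall>z. w \<noteq> Var z"
  proof (intro allI notI)
    fix z assume "w = Var z" then have "t = Var z" using a by (simp add: app_Var_notdom)
    then show False using a(3) by simp
  qed
  then show ?thesis using a(1) args_app by simp
qed

lemma EncFS:
  assumes c1: "Cls t1" and c2: "Cls t2" and w1: "t1 = app \<sigma> w1" "w1 \<in> FS" "ndv w1"
    and e1: "is_encryption t1" and r: "repl s M t1 = repl s M t2"
  shows "t1 = t2"
proof -
  have n1: "t1 \<noteq> Nm s" "t2 \<noteq> Nm s" using Cls_not_s c1 c2 by auto
  have H: "length (args t1) = length (args t2) \<and> set_args t1 (args t2) = t2 \<and>
         map (repl s M) (args t1) = map (repl s M) (args t2)" using repl_same_head[OF n1 r] .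
  have l3: "length (args t1) = 3" using e1 by (cases t1) (auto simp: is_encryption_def)
  then have at1: "args t1 \<noteq> []" by auto
  from nonvar_norm[OF w1(1) w1(3) at1] have nv1: "\<forall>z. w1 \<noteq> Var z" and aa1: "args t1 = map (app \<sigma>) (args w1)"
    by auto
  have ew1: "is_encryption w1" using e1 w1(1) nv1 by (cases w1) (auto simp: is_encryption_def app_hom)
  from agent_rand[OF w1(2) ew1] obtain v1 q1 r1 where R1: "v1 \<in> ran \<sigma>" "subterm_at v1 q1 = Some w1"
    "r1 \<in> n - {s}" "args w1 ! 2 = Nm r1" "prob_enc (ran \<sigma>) v1 q1" "subterm_at v1 (q1 @ [3]) = Some (Nm r1)"
    by blast
  have lw1: "length (args w1) = 3" using l3 aa1 by simp
  have a12: "args t1 ! 2 = Nm r1" using aa1 R1(4) lw1 by (simp add: app_hom)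
  have e2: "is_encryption t2" using H e1 ise_set_args[of "args t2" t1] by metis
  have "repl s M (args t2 ! 2) = repl s M (args t1 ! 2)" using H l3
    by (metis lessI numeral_2_eq_2 numeral_3_eq_3 nth_map)
  also have "\<dots> = Nm r1" using a12 R1(3) by simp
  finally have rc: "repl s M (args t2 ! 2) = Nm r1" .
  have "Cls (args t2 ! 2)" using Cls_arg[OF c2, of 2] H l3 by simp
  then have c22: "args t2 ! 2 = Nm r1" using repl_nm[OF Cls_not_s rc] by simp
  from Cls_norm[OF c2] obtain w2 where w2: "t2 = app \<sigma> w2" "Rep w2" "ndv w2" by blast
  have at2: "args t2 \<noteq> []" using H l3 by auto
  from nonvar_norm[OF w2(1) w2(3) at2] have nv2: "\<forall>z. w2 \<noteq> Var z" and aa2: "args t2 = map (app \<sigma>) (args w2)"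
    by auto
  have lw2: "length (args w2) = 3" using H l3 aa2 by simp
  have ac2: "app \<sigma> (args w2 ! 2) = Nm r1" using c22 aa2 lw2 by simp
  show ?thesis
  proof (cases "w2 \<in> FS")
    case True
    have ew2: "is_encryption w2" using e2 w2(1) nv2 by (cases w2) (auto simp: is_encryption_def app_hom)
    from agent_rand[OF True ew2] obtain v2 q2 r2 where R2: "v2 \<in> ran \<sigma>" "subterm_at v2 q2 = Some w2"
      "args w2 ! 2 = Nm r2" "subterm_at v2 (q2 @ [3]) = Some (Nm r2)"
      by blast
    have "r2 = r1" using ac2 R2(3) by (simp add: app_hom)
    then have "subterm_at v2 (q2 @ [3]) = subterm_at v1 (q1 @ [3])" using R1(6) R2(4) by simp
    then obtain q' where q': "q2 @ [3] = q' @ [3]" "subterm_at v2 q' = subterm_at v1 q1"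
      using R1(5) R2(1) unfolding prob_enc_def by blast
    then have "w2 = w1" using R1(2) R2(2) by simp
    then show ?thesis using w1 w2 by simp
  next
    case False
    then have pw: "public (n, \<sigma>) w2" "vars w2 \<subseteq> dom \<sigma>" using w2(2) unfolding Rep_def by auto
    let ?c = "args w2 ! 2"
    have cm: "?c \<in> set (args w2)" using lw2 by simp
    have pc: "public (n, \<sigma>) ?c" "vars ?c \<subseteq> dom \<sigma>" using public_arg[OF pw(1) cm] vars_arg[OF cm] pw(2) by auto
    show ?thesis
    proof (cases ?c)
      case (Var y)
      then have "y \<in> dom \<sigma>" using pc by simp
      from app_var_nm[OF this] obtain y' where "\<sigma> y' = Some (Nm r1)" using ac2 Var by auto
      then have nr: "Nm r1 \<in> ran \<sigma>" by (rule ranI)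
      have "subterm_at (Nm r1) [] = subterm_at v1 (q1 @ [3])" using R1(6) by simp
      then obtain q' where "[] = q' @ [3]" using R1(5) nr unfolding prob_enc_def by blast
      then show ?thesis by simp
    next
      case (Nm m)
      then have "m = r1" using ac2 by (simp add: app_hom)
      then show ?thesis using pc Nm R1(3) by simp
    qed (use ac2 in \<open>simp_all add: app_hom\<close>)
  qed
qed

lemma K: "Cls t1 \<Longrightarrow> Cls t2 \<Longrightarrow> repl s M t1 = repl s M t2 \<Longrightarrow> t1 = t2"
proof (induction t1 arbitrary: t2 rule: measure_induct_rule[of size])
  case (less t1)
  note c1 = less.prems(1) and c2 = less.prems(2) and r = less.prems(3)
  have n1: "t1 \<noteq> Nm s" "t2 \<noteq> Nm s" using Cls_not_s c1 c2 by auto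
  have H: "length (args t1) = length (args t2) \<and> set_args t1 (args t2) = t2 \<and>
         map (repl s M) (args t1) = map (repl s M) (args t2)" using repl_same_head[OF n1 r] .
  have e12: "is_encryption t2 = is_encryption t1" using H ise_set_args[of "args t2" t1] by metis
  show ?case
  proof (cases "args t1 = []")
    case True
    then have "args t2 = []" using H by simp
    then show ?thesis using H True set_args_self[of t1] by simp
  next
    case at1: False
    have at2: "args t2 \<noteq> []" using H at1 by auto
    from Cls_norm[OF c1] obtain w1 where w1: "t1 = app \<sigma> w1" "Rep w1" "ndv w1" by blast
    from Cls_norm[OF c2] obtain w2 where w2: "t2 = app \<sigma> w2" "Rep w2" "ndv w2" by blast
    from nonvar_norm[OF w1(1) w1(3) at1] have aa1: "args t1 = map (app \<sigma>) (args w1)" by auto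
    from nonvar_norm[OF w2(1) w2(3) at2] have aa2: "args t2 = map (app \<sigma>) (args w2)" by auto
    show ?thesis
    proof (cases "is_encryption t1 \<and> (w1 \<in> FS \<or> w2 \<in> FS)")
      case True
      then show ?thesis
      proof (cases "w1 \<in> FS")
        case True
        then show ?thesis using EncFS[OF c1 c2 w1(1) True w1(3) _ r] \<open>is_encryption t1 \<and> _\<close> by blast
      next
        case False
        then have "w2 \<in> FS" using True by blast
        then show ?thesis using EncFS[OF c2 c1 w2(1) _ w2(3) _ r[symmetric]] e12 True by metis
      qed
    next
      case False
      have allc: "\<forall>i<length (args t1). Cls (args t1 ! i) \<and> Cls (args t2 ! i)"
      proof (intro allI impI)
        fix i assume i: "i < length (args t1)"
        show "Cls (args t1 ! i) \<and> Cls (args t2 ! i)"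
        proof (cases "is_encryption t1 \<and> i = 0")
          case False
          then show ?thesis using Cls_arg[OF c1 i] Cls_arg[OF c2, of i] i H e12 by auto
        next
          case True
          then have p: "w1 \<notin> FS" "w2 \<notin> FS" using \<open>\<not> (is_encryption t1 \<and> (w1 \<in> FS \<or> w2 \<in> FS))\<close> by auto
          then have pw1: "public (n, \<sigma>) w1" "vars w1 \<subseteq> dom \<sigma>" and pw2: "public (n, \<sigma>) w2" "vars w2 \<subseteq> dom \<sigma>"
            using w1(2) w2(2) unfolding Rep_def by auto
          have i2: "i < length (args w2)" "i < length (args w1)" using i H aa1 aa2 by auto
          have m1: "args w1 ! i \<in> set (args w1)" and m2: "args w2 ! i \<in> set (args w2)" using i2 by auto
          have "Cls (app \<sigma> (args w1 ! i))" using pubCls public_arg[OF pw1(1) m1] vars_arg[OF m1] pw1(2) by auto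
          moreover have "Cls (app \<sigma> (args w2 ! i))" using pubCls public_arg[OF pw2(1) m2] vars_arg[OF m2] pw2(2) by auto
          ultimately show ?thesis using aa1 aa2 i2 by simp
        qed
      qed
      have "args t1 = args t2"
      proof (rule nth_equalityI)
        show "length (args t1) = length (args t2)" using H by simp
      next
        fix i assume i: "i < length (args t1)"
        have m: "args t1 ! i \<in> set (args t1)" using i by simp
        have "repl s M (args t1 ! i) = repl s M (args t2 ! i)" using H i by (metis nth_map)
        then show "args t1 ! i = args t2 ! i" using less.IH[OF args_size[OF m]] allc i by blast
      qed
      then show ?thesis using H set_args_self[of t1] by simp
    qed
  qed
qed

end


lemma repl_dec:
  "t \<noteq> Nm s \<Longrightarrow> repl s M t = Pair x y \<Longrightarrow> \<exists>a b. t = Pair a b \<and> repl s M a = x \<and> repl s M b = y"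
  "t \<noteq> Nm s \<Longrightarrow> repl s M t = Enc x y z \<Longrightarrow> \<exists>a b c. t = Enc a b c \<and> repl s M a = x \<and> repl s M b = y \<and> repl s M c = z"
  "t \<noteq> Nm s \<Longrightarrow> repl s M t = Enca x y z \<Longrightarrow> \<exists>a b c. t = Enca a b c \<and> repl s M a = x \<and> repl s M b = y \<and> repl s M c = z"
  "t \<noteq> Nm s \<Longrightarrow> repl s M t = Pub x \<Longrightarrow> \<exists>a. t = Pub a \<and> repl s M a = x"
  "t \<noteq> Nm s \<Longrightarrow> repl s M t = Priv x \<Longrightarrow> \<exists>a. t = Priv a \<and> repl s M a = x"
  "t \<noteq> Nm s \<Longrightarrow> repl s M t = Sign x y \<Longrightarrow> \<exists>a b. t = Sign a b \<and> repl s M a = x \<and> repl s M b = y"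
  "t \<noteq> Nm s \<Longrightarrow> repl s M t = Pi1 x \<Longrightarrow> \<exists>a. t = Pi1 a \<and> repl s M a = x"
  "t \<noteq> Nm s \<Longrightarrow> repl s M t = Pi2 x \<Longrightarrow> \<exists>a. t = Pi2 a \<and> repl s M a = x"
  "t \<noteq> Nm s \<Longrightarrow> repl s M t = Retrieve x \<Longrightarrow> \<exists>a. t = Retrieve a \<and> repl s M a = x"
  "t \<noteq> Nm s \<Longrightarrow> repl s M t = Dec x y \<Longrightarrow> \<exists>a b. t = Dec a b \<and> repl s M a = x \<and> repl s M b = y"
  "t \<noteq> Nm s \<Longrightarrow> repl s M t = Deca x y \<Longrightarrow> \<exists>a b. t = Deca a b \<and> repl s M a = x \<and> repl s M b = y"
  "t \<noteq> Nm s \<Longrightarrow> repl s M t = Check x y z \<Longrightarrow> \<exists>a b c. t = Check a b c \<and> repl s M a = x \<and> repl s M b = y \<and> repl s M c = z"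
  by (cases t; auto split: if_splits)+

context ctx begin

definition nonrand :: "trm \<Rightarrow> bool" where
  "nonrand w \<longleftrightarrow> (\<forall>U0\<in>ran \<sigma>. \<forall>q. enc_occ U0 q \<longrightarrow> subterm_at U0 (q @ [3]) \<noteq> Some w)"

definition Good :: "trm \<Rightarrow> bool" where
  "Good u \<longleftrightarrow> (\<exists>w. u = app \<sigma> w \<and> ((public (n, \<sigma>) w \<and> vars w \<subseteq> dom \<sigma>) \<or> (w \<in> FS \<and> nonrand w)))"

lemma GoodArg:
  assumes "Cls A" "j < length (args A)" "j \<noteq> 2"
  shows "Good (args A ! j)"
proof -
  from Cls_norm[OF assms(1)] obtain w where w: "A = app \<sigma> w" "Rep w" "ndv w" by blast
  have aA: "args A \<noteq> []" using assms(2) by auto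
  from nonvar_norm[OF w(1) w(3) aA] have aa: "args A = map (app \<sigma>) (args w)" by auto
  have jl: "j < length (args w)" using assms(2) aa by simp
  let ?a = "args w ! j"
  have am: "?a \<in> set (args w)" using jl by simp
  have eq: "args A ! j = app \<sigma> ?a" using aa jl by simp
  show ?thesis
  proof (cases "w \<in> FS")
    case False
    then have "public (n, \<sigma>) w" "vars w \<subseteq> dom \<sigma>" using w(2) unfolding Rep_def by auto
    then have "public (n, \<sigma>) ?a" "vars ?a \<subseteq> dom \<sigma>" using public_arg[OF _ am] vars_arg[OF am] by auto
    then show ?thesis unfolding Good_def using eq by blast
  next
    case True
    then obtain v q where v: "v \<in> ran \<sigma>" "subterm_at v q = Some w" unfolding fs_iff by auto
    have sa: "subterm_at v (q @ [Suc j]) = Some ?a" using v(2) jl by (simp add: subterm_at_append)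
    have afs: "?a \<in> FS" unfolding fs_iff using v(1) sa by auto
    have "nonrand ?a"
      unfolding nonrand_def
    proof (intro ballI allI impI notI)
      fix U0 q' assume u0: "U0 \<in> ran \<sigma>" "enc_occ U0 q'" "subterm_at U0 (q' @ [3]) = Some ?a"
      have "prob_enc (ran \<sigma>) U0 q'" using bspec[OF wf_enc u0(1)] u0(2) by auto
      then obtain q'' where "q @ [Suc j] = q'' @ [3]"
        unfolding prob_enc_def using v(1) sa u0(3) by (metis (no_types, lifting))
      then show False using assms(3) by simp
    qed
    then show ?thesis unfolding Good_def using eq afs by blast
  qed
qed

lemma Cls_destr_args:
  assumes "Cls T" "is_destructor T" "i < length (args T)"
  shows "Cls (args T ! i)"
proof -
  have "\<not> is_encryption T" using assms(2) by (cases T) (auto simp: is_destructor_def is_encryption_def)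
  then show ?thesis using Cls_arg[OF assms(1,3)] by simp
qed

lemma KEY:
  assumes pU: "public (n, \<sigma>) U" "vars U \<subseteq> dom \<sigma>" and rr: "rroot (repl s M (app \<sigma> U)) V"
  shows "\<exists>u. rroot (app \<sigma> U) u \<and> V = repl s M u \<and> (u = ok \<or> Good u)"
proof -
  let ?T = "app \<sigma> U"
  have cT: "Cls ?T" using pubCls[OF pU] .
  have nT: "?T \<noteq> Nm s" using Cls_not_s[OF cT] .
  have dT: "is_destructor ?T" using rroot_destr[OF rr] isd_repl[OF nT] by metis
  have ca: "\<And>i. i < length (args ?T) \<Longrightarrow> Cls (args ?T ! i)" using Cls_destr_args[OF cT dT] .
  from rr show ?thesis
  proof cases
    case (1 z2)
    from repl_dec(7)[OF nT 1(1)] obtain A where A: "?T = Pi1 A" "repl s M A = Pair V z2" by blast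
    have cA: "Cls A" using ca[of 0] A by simp
    from repl_dec(1)[OF Cls_not_s[OF cA] A(2)] obtain a b where ab: "A = Pair a b" "repl s M a = V" by blast
    have "Good a" using GoodArg[OF cA, of 0] ab by simp
    moreover have "rroot ?T a" using A ab rroot.intros(1) by simp
    ultimately show ?thesis using 1 ab by blast
  next
    case (2 z1)
    from repl_dec(8)[OF nT 2(1)] obtain A where A: "?T = Pi2 A" "repl s M A = Pair z1 V" by blast
    have cA: "Cls A" using ca[of 0] A by simp
    from repl_dec(1)[OF Cls_not_s[OF cA] A(2)] obtain a b where ab: "A = Pair a b" "repl s M b = V" by blast
    have "Good b" using GoodArg[OF cA, of 1] ab by simp
    moreover have "rroot ?T b" using A ab rroot.intros(2) by simp
    ultimately show ?thesis using 2 ab by blast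
  next
    case (3 z2 z3)
    from repl_dec(10)[OF nT 3(1)] obtain A B where AB: "?T = Dec A B" "repl s M A = Enc V z2 z3" "repl s M B = z2"
      by blast
    have cA: "Cls A" "Cls B" using ca[of 0] ca[of 1] AB by simp_all
    from repl_dec(2)[OF Cls_not_s[OF cA(1)] AB(2)] obtain a K r where aK: "A = Enc a K r" "repl s M a = V" "repl s M K = z2"
      by blast
    have cK: "Cls K" using Cls_arg[OF cA(1), of 1] aK by (simp add: is_encryption_def)
    have "K = B" using K[OF cK cA(2)] aK AB by simp
    then have "rroot ?T a" using AB aK rroot.intros(3) by simp
    moreover have "Good a" using GoodArg[OF cA(1), of 0] aK by simp
    ultimately show ?thesis using 3 aK by blast
  next
    case (4 z2 z3)
    from repl_dec(11)[OF nT 4(1)] obtain A B where AB: "?T = Deca A B" "repl s M A = Enca V (Pub z2) z3" "repl s M B = Priv z2"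
      by blast
    have cA: "Cls A" "Cls B" using ca[of 0] ca[of 1] AB by simp_all
    from repl_dec(3)[OF Cls_not_s[OF cA(1)] AB(2)] obtain a P r where aP: "A = Enca a P r" "repl s M a = V" "repl s M P = Pub z2"
      by blast
    have cP: "Cls P" using Cls_arg[OF cA(1), of 1] aP by (simp add: is_encryption_def)
    from repl_dec(4)[OF Cls_not_s[OF cP] aP(3)] obtain Kk where Kk: "P = Pub Kk" "repl s M Kk = z2" by blast
    have cK: "Cls Kk" using Cls_arg[OF cP, of 0] Kk by (simp add: is_encryption_def)
    from repl_dec(5)[OF Cls_not_s[OF cA(2)] AB(3)] obtain W where W: "B = Priv W" "repl s M W = z2" by blast
    have cW: "Cls W" using Cls_arg[OF cA(2), of 0] W by (simp add: is_encryption_def)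
    have "Kk = W" using K[OF cK cW] Kk W by simp
    then have "rroot ?T a" using AB aP Kk W rroot.intros(4) by simp
    moreover have "Good a" using GoodArg[OF cA(1), of 0] aP by simp
    ultimately show ?thesis using 4 aP by blast
  next
    case (5 z1 z2)
    from repl_dec(12)[OF nT 5(1)] obtain A B C where ABC: "?T = Check A B C" "repl s M A = z1"
      "repl s M B = Sign z1 (Priv z2)" "repl s M C = Pub z2"
      by blast
    have cA: "Cls A" "Cls B" "Cls C" using ca[of 0] ca[of 1] ca[of 2] ABC by simp_all
    from repl_dec(6)[OF Cls_not_s[OF cA(2)] ABC(3)] obtain m P where mP: "B = Sign m P" "repl s M m = z1" "repl s M P = Priv z2"
      by blast
    have cm: "Cls m" "Cls P" using Cls_arg[OF cA(2), of 0] Cls_arg[OF cA(2), of 1] mP by (simp_all add: is_encryption_def)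
    from repl_dec(5)[OF Cls_not_s[OF cm(2)] mP(3)] obtain W where W: "P = Priv W" "repl s M W = z2" by blast
    have cW: "Cls W" using Cls_arg[OF cm(2), of 0] W by (simp add: is_encryption_def)
    from repl_dec(4)[OF Cls_not_s[OF cA(3)] ABC(4)] obtain Kk where Kk: "C = Pub Kk" "repl s M Kk = z2" by blast
    have cK: "Cls Kk" using Cls_arg[OF cA(3), of 0] Kk by (simp add: is_encryption_def)
    have "Kk = W" using K[OF cK cW] Kk W by simp
    moreover have "A = m" using K[OF cA(1) cm(1)] ABC mP by simp
    ultimately have "rroot ?T ok" using ABC mP W Kk rroot.intros(5) by simp
    moreover have "V = repl s M ok" using 5 by (simp add: ok_def)
    ultimately show ?thesis by blast
  next
    case (6 z2)
    from repl_dec(9)[OF nT 6(1)] obtain B where B: "?T = Retrieve B" "repl s M B = Sign V z2" by blast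
    have cB: "Cls B" using ca[of 0] B by simp
    from repl_dec(6)[OF Cls_not_s[OF cB] B(2)] obtain a b where ab: "B = Sign a b" "repl s M a = V" by blast
    have "Good a" using GoodArg[OF cB, of 0] ab by simp
    moreover have "rroot ?T a" using B ab rroot.intros(6) by simp
    ultimately show ?thesis using 6 ab by blast
  qed
qed

end


lemma snoc_split: "q0 @ p = q'' @ [3::nat] \<Longrightarrow> p \<noteq> [] \<Longrightarrow> p = butlast p @ [3] \<and> q'' = q0 @ butlast p"
proof -
  assume a: "q0 @ p = q'' @ [3]" "p \<noteq> []"
  have pl: "p = butlast p @ [last p]" using a(2) by simp
  then have "q0 @ butlast p @ [last p] = q'' @ [3]" using a(1) by metis
  then have "(q0 @ butlast p) @ [last p] = q'' @ [3]" by simp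
  then have "q0 @ butlast p = q''" "last p = 3" by blast+
  then show ?thesis using pl by simp
qed

lemma subterm_at_size': "subterm_at t p = Some u \<Longrightarrow> p \<noteq> [] \<Longrightarrow> size u < size t"
  using subterm_at_size by (cases p) auto

locale ext = ctx +
  fixes z :: var and w0 :: trm
  assumes zd: "z \<notin> dom \<sigma>" and zr: "\<forall>v\<in>ran \<sigma>. z \<notin> vars v" and wfs: "w0 \<in> FS"
begin

abbreviation "\<sigma>' \<equiv> \<sigma>(z \<mapsto> w0)"

lemma z_fs: "u \<in> FS \<Longrightarrow> z \<notin> vars u"
proof -
  assume "u \<in> FS"
  then obtain v where v: "v \<in> ran \<sigma>" "u \<in> sub v" unfolding frame_subterms_def subterms_sub by auto
  have "vars u \<subseteq> vars v" using sub_trans[OF v(2)] unfolding vars_sub by blast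
  then show ?thesis using zr v(1) by blast
qed

lemma zw: "z \<notin> vars w0" using z_fs[OF wfs] .

lemma E1: "z \<notin> vars t \<Longrightarrow> subst1 \<sigma>' t = subst1 \<sigma> t"
  by (induction t) auto

lemma E2: "z \<notin> vars t \<Longrightarrow> z \<notin> vars (subst1 \<sigma> t)"
proof
  assume a: "z \<notin> vars t" "z \<in> vars (subst1 \<sigma> t)"
  from vars_subst1[OF a(2)] obtain x where x: "x \<in> vars t"
    "(\<sigma> x = None \<and> z = x) \<or> (\<exists>v. \<sigma> x = Some v \<and> z \<in> vars v)" by blast
  then show False using a(1) zr by (auto intro: ranI)
qed

lemma E3: "z \<notin> vars t \<Longrightarrow> (subst1 \<sigma>' ^^ j) t = (subst1 \<sigma> ^^ j) t"
proof (induction j arbitrary: t)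
  case 0 then show ?case by simp
next
  case (Suc j)
  have "(subst1 \<sigma>' ^^ Suc j) t = (subst1 \<sigma>' ^^ j) (subst1 \<sigma>' t)" by (simp add: funpow_Suc_right del: funpow.simps)
  also have "\<dots> = (subst1 \<sigma>' ^^ j) (subst1 \<sigma> t)" using E1[OF Suc.prems] by simp
  also have "\<dots> = (subst1 \<sigma> ^^ j) (subst1 \<sigma> t)" using Suc.IH[OF E2[OF Suc.prems]] .
  also have "\<dots> = (subst1 \<sigma> ^^ Suc j) t" by (simp add: funpow_Suc_right del: funpow.simps)
  finally show ?case .
qed

lemma card': "card (dom \<sigma>') = Suc (card (dom \<sigma>))"
  using zd is_frameD[OF fr] by simp

lemma E4: "z \<notin> vars t \<Longrightarrow> app \<sigma>' t = app \<sigma> t"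
proof -
  assume a: "z \<notin> vars t"
  have "app \<sigma>' t = (subst1 \<sigma>' ^^ Suc (card (dom \<sigma>))) t" unfolding app_def card' ..
  also have "\<dots> = (subst1 \<sigma> ^^ Suc (card (dom \<sigma>))) t" using E3[OF a] .
  also have "\<dots> = subst1 \<sigma> (app \<sigma> t)" unfolding app_def by simp
  also have "\<dots> = app \<sigma> t" using app_fix[OF fr] .
  finally show ?thesis .
qed

lemma E4d: "vars t \<subseteq> dom \<sigma> \<Longrightarrow> app \<sigma>' t = app \<sigma> t"
  using E4 zd by blast

lemma E5: "app \<sigma>' (Var z) = app \<sigma> w0"
proof -
  have "app \<sigma>' (Var z) = (subst1 \<sigma>' ^^ Suc (card (dom \<sigma>))) (Var z)" unfolding app_def card' ..
  also have "\<dots> = (subst1 \<sigma>' ^^ card (dom \<sigma>)) (subst1 \<sigma>' (Var z))"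
    by (simp add: funpow_Suc_right del: funpow.simps)
  also have "\<dots> = (subst1 \<sigma>' ^^ card (dom \<sigma>)) w0" by simp
  also have "\<dots> = app \<sigma> w0" unfolding app_def using E3[OF zw] .
  finally show ?thesis .
qed

lemma E6: "is_frame (n, \<sigma>')"
proof -
  have fin: "finite n" "finite (dom \<sigma>)" using fr unfolding is_frame_def by auto
  let ?R = "{(x, y). x \<in> dom \<sigma>' \<and> y \<in> vars (the (\<sigma>' x))}"
  have ac: "acyclic (Rel \<sigma>)" using is_frameD[OF fr] by simp
  have nr: "z \<notin> Range ?R"
  proof
    assume "z \<in> Range ?R"
    then obtain x where x: "x \<in> dom \<sigma>'" "z \<in> vars (the (\<sigma>' x))" by auto
    show False
    proof (cases "x = z")
      case True then show False using x zw by simp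
    next
      case False
      then obtain v where "\<sigma> x = Some v" "z \<in> vars v" using x by auto
      then show False using zr by (auto intro: ranI)
    qed
  qed
  have sub1: "\<And>a b. (a, b) \<in> ?R \<Longrightarrow> a \<noteq> z \<Longrightarrow> (a, b) \<in> Rel \<sigma>"
    unfolding Rel_def by auto
  have rng: "\<And>a y. (a, y) \<in> ?R\<^sup>+ \<Longrightarrow> y \<noteq> z"
  proof -
    fix a y assume "(a, y) \<in> ?R\<^sup>+"
    then have "y \<in> Range (?R\<^sup>+)" by (rule RangeI)
    then have "y \<in> Range ?R" by (simp only: trancl_range)
    then show "y \<noteq> z" using nr by auto
  qed
  have tr: "(a, b) \<in> ?R\<^sup>+ \<Longrightarrow> a \<noteq> z \<Longrightarrow> (a, b) \<in> (Rel \<sigma>)\<^sup>+" for a b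
  proof (induction rule: trancl_induct)
    case (base y) then show ?case using sub1 by blast
  next
    case (step y c)
    have "y \<noteq> z" using rng[OF step(1)] .
    then have "(y, c) \<in> Rel \<sigma>" using step(2) sub1 by blast
    moreover have "(a, y) \<in> (Rel \<sigma>)\<^sup>+" using step(3,4) by blast
    ultimately show ?case by (rule trancl_into_trancl[rotated])
  qed
  have "acyclic ?R"
    unfolding acyclic_def
  proof (intro allI notI)
    fix a assume a: "(a, a) \<in> ?R\<^sup>+"
    have "a \<noteq> z" using rng[OF a] .
    then show False using tr[OF a] ac unfolding acyclic_def by blast
  qed
  then show ?thesis unfolding is_frame_def using fin by simp
qed

declare fun_upd_apply[simp del]

lemma E8:
  assumes dw: "ded (n, \<sigma>) (app \<sigma> w0)"
  shows "ded (n, \<sigma>) W \<longleftrightarrow> ded (n, \<sigma>') W"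
proof
  have "ded \<phi> W \<Longrightarrow> \<phi> = (n, \<sigma>) \<Longrightarrow> ded (n, \<sigma>') W" for \<phi>
  proof (induction rule: ded.induct)
    case (ded_var x \<phi>)
    then have "x \<in> dom \<sigma>" by simp
    then have "app \<sigma>' (Var x) = app \<sigma> (Var x)" using E4d[of "Var x"] by simp
    moreover have "ded (n, \<sigma>') (app \<sigma>' (Var x))" using ded.ded_var[of x "(n, \<sigma>')"] \<open>x \<in> dom \<sigma>\<close> by simp
    ultimately show ?case using ded_var by (simp del: fun_upd_apply)
  next
    case (ded_name m \<phi>) then show ?case using ded.ded_name[of m "(n, \<sigma>')"] by simp
  next
    case (ded_eq \<phi> a b) then show ?case using ded.ded_eq by blast
  qed (simp_all add: ded.intros(3-14))
  then show "ded (n, \<sigma>) W \<Longrightarrow> ded (n, \<sigma>') W" by blast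
next
  have "ded \<phi> W \<Longrightarrow> \<phi> = (n, \<sigma>') \<Longrightarrow> ded (n, \<sigma>) W" for \<phi>
  proof (induction rule: ded.induct)
    case (ded_var x \<phi>)
    show ?case
    proof (cases "x = z")
      case True then show ?thesis using ded_var E5 dw by (simp del: fun_upd_apply)
    next
      case False
      then have xd: "x \<in> dom \<sigma>" using ded_var by auto
      then have "app \<sigma>' (Var x) = app \<sigma> (Var x)" using E4d[of "Var x"] by simp
      moreover have "ded (n, \<sigma>) (app \<sigma> (Var x))" using ded.ded_var[of x "(n, \<sigma>)"] xd by simp
      ultimately show ?thesis using ded_var by (simp del: fun_upd_apply)
    qed
  next
    case (ded_name m \<phi>) then show ?case using ded.ded_name[of m "(n, \<sigma>)"] by simp
  next
    case (ded_eq \<phi> a b) then show ?case using ded.ded_eq by blast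
  qed (simp_all add: ded.intros(3-14))
  then show "ded (n, \<sigma>') W \<Longrightarrow> ded (n, \<sigma>) W" by blast
qed

declare fun_upd_apply[simp]

end


context ext begin

lemma E7:
  assumes nr: "nonrand w0"
  shows "well_formed (n, \<sigma>') s"
proof -
  have rn: "ran \<sigma>' = insert w0 (ran \<sigma>)" using zd by (simp add: domIff)
  obtain v0 q0 where v0: "v0 \<in> ran \<sigma>" "subterm_at v0 q0 = Some w0" using wfs unfolding fs_iff by auto
  have sw: "\<And>p. subterm_at v0 (q0 @ p) = subterm_at w0 p" using v0(2) by (simp add: subterm_at_append)
  have fs': "frame_subterms (n, \<sigma>') = FS"
  proof -
    have sw0: "\<And>x. x \<in> sub w0 \<Longrightarrow> x \<in> sub v0" using sub_trans[OF subterm_at_sub[OF v0(2)]] .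
    have "sub w0 \<subseteq> FS"
    proof
      fix x assume "x \<in> sub w0"
      then have "x \<in> sub v0" by (rule sw0)
      then show "x \<in> FS" using v0(1) unfolding frame_subterms_def subterms_sub by (auto intro!: bexI[of _ v0])
    qed
    moreover have "frame_subterms (n, \<sigma>') = sub w0 \<union> FS"
      unfolding frame_subterms_def subterms_sub snd_conv rn by simp
    ultimately show ?thesis by (simp add: Un_absorb1)
  qed
  have nw: "\<And>q. subterm_at w0 (q @ [3]) \<noteq> Some w0"
  proof
    fix q assume "subterm_at w0 (q @ [3]) = Some w0"
    from subterm_at_size'[OF this] show False by simp
  qed
  have c1: "\<forall>U\<in>ran \<sigma>'. \<forall>q. enc_occ U q \<longrightarrow> agent_enc (n - {s}) U q \<and> prob_enc (ran \<sigma>') U q"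
  proof (intro ballI allI impI)
    fix U q assume U: "U \<in> ran \<sigma>'" and eo: "enc_occ U q"
    show "agent_enc (n - {s}) U q \<and> prob_enc (ran \<sigma>') U q"
    proof (cases "U \<in> ran \<sigma>")
      case True
      have A: "agent_enc (n - {s}) U q" "prob_enc (ran \<sigma>) U q" using bspec[OF wf_enc True] eo by auto
      have "prob_enc (ran \<sigma>') U q"
        unfolding prob_enc_def rn
      proof (intro ballI allI impI)
        fix V p assume V: "V \<in> insert w0 (ran \<sigma>)" and e: "subterm_at V p = subterm_at U (q @ [3])"
        show "\<exists>q'. p = q' @ [3] \<and> subterm_at V q' = subterm_at U q"
        proof (cases "V \<in> ran \<sigma>")
          case True then show ?thesis using A(2) e unfolding prob_enc_def by blast
        next
          case False
          then have Vw: "V = w0" using V by simp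
          have pn: "p \<noteq> []"
          proof
            assume "p = []"
            then have "subterm_at U (q @ [3]) = Some w0" using e Vw by simp
            then show False using nr True eo unfolding nonrand_def by blast
          qed
          have "subterm_at v0 (q0 @ p) = subterm_at U (q @ [3])" using sw e Vw by simp
          then obtain q'' where q'': "q0 @ p = q'' @ [3]" "subterm_at v0 q'' = subterm_at U q"
            using A(2) v0(1) unfolding prob_enc_def by blast
          from snoc_split[OF q''(1) pn] have "p = butlast p @ [3]" "q'' = q0 @ butlast p" by auto
          then show ?thesis using q''(2) sw Vw by (intro exI[of _ "butlast p"]) auto
        qed
      qed
      then show ?thesis using A(1) by simp
    next
      case False
      then have Uw: "U = w0" using U rn by simp
      have eo': "enc_occ v0 (q0 @ q)" using eo Uw sw unfolding enc_occ_def by simp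
      have A: "agent_enc (n - {s}) v0 (q0 @ q)" "prob_enc (ran \<sigma>) v0 (q0 @ q)"
        using bspec[OF wf_enc v0(1)] eo' by auto
      have ag: "agent_enc (n - {s}) U q" using A(1) Uw sw unfolding agent_enc_def by simp
      have "prob_enc (ran \<sigma>') U q"
        unfolding prob_enc_def rn
      proof (intro ballI allI impI)
        fix V p assume V: "V \<in> insert w0 (ran \<sigma>)" and e: "subterm_at V p = subterm_at U (q @ [3])"
        have e': "subterm_at V p = subterm_at v0 ((q0 @ q) @ [3])" using e Uw sw by simp
        show "\<exists>q'. p = q' @ [3] \<and> subterm_at V q' = subterm_at U q"
        proof (cases "V \<in> ran \<sigma>")
          case True
          then obtain q' where "p = q' @ [3]" "subterm_at V q' = subterm_at v0 (q0 @ q)"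
            using A(2) e' unfolding prob_enc_def by blast
          then show ?thesis using Uw sw by auto
        next
          case False
          then have Vw: "V = w0" using V by simp
          have pn: "p \<noteq> []"
          proof
            assume "p = []"
            then have "subterm_at w0 (q @ [3]) = Some w0" using e Vw Uw by simp
            then show False using nw by blast
          qed
          have "subterm_at v0 (q0 @ p) = subterm_at v0 ((q0 @ q) @ [3])" using sw e' Vw by simp
          then obtain q'' where q'': "q0 @ p = q'' @ [3]" "subterm_at v0 q'' = subterm_at v0 (q0 @ q)"
            using A(2) v0(1) unfolding prob_enc_def by blast
          from snoc_split[OF q''(1) pn] have "p = butlast p @ [3]" "q'' = q0 @ butlast p" by auto
          then show ?thesis using q''(2) sw Vw Uw by (intro exI[of _ "butlast p"]) auto
        qed
      qed
      then show ?thesis using ag by simp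
    qed
  qed
  show ?thesis unfolding well_formed_def fst_conv snd_conv fs'
    apply (rule conjI)
     apply (rule c1)
    apply (rule conjI)
     apply (rule wf_keys)
    apply (rule wf_nod)
    done
qed

end

context ctx begin

lemma ctx_inst: "ctx n \<sigma> s M"
  by (rule ctx.intro) (fact fr sn wf nded clM nfM pubM)+

lemma app_upd:
  assumes "z \<notin> dom \<sigma>" "\<forall>v\<in>ran \<sigma>. z \<notin> vars v" "w0 \<in> FS" "vars t \<subseteq> dom \<sigma>"
  shows "app (\<sigma>(z \<mapsto> w0)) t = app \<sigma> t"
proof -
  have "ext n \<sigma> s M z w0"
    by (rule ext.intro[OF ctx_inst]) (unfold_locales, use assms in auto)
  then show ?thesis using ext.E4d assms(4) by blast
qed

end


lemma isd_simps[simp]: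
  "\<not> is_destructor (Var x)" "\<not> is_destructor (Nm m)" "\<not> is_destructor (Cst c)"
  "\<not> is_destructor (Enc a b d)" "is_destructor (Dec a b)" "\<not> is_destructor (Enca a b d)"
  "is_destructor (Deca a b)" "\<not> is_destructor (Pub a)" "\<not> is_destructor (Priv a)"
  "\<not> is_destructor (Pair a b)" "is_destructor (Pi1 a)" "is_destructor (Pi2 a)"
  "\<not> is_destructor (Sign a b)" "is_destructor (Check a b d)" "is_destructor (Retrieve a)"
  by (simp_all add: is_destructor_def)

definition df :: "trm \<Rightarrow> bool" where "df t \<longleftrightarrow> (\<forall>u\<in>sub t. \<not> is_destructor u)"

lemma df_simps[simp]:
  "df (Var x)" "df (Nm m)" "df (Cst c)"
  "df (Enc a b d) \<longleftrightarrow> df a \<and> df b \<and> df d" "\<not> df (Dec a b)"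
  "df (Enca a b d) \<longleftrightarrow> df a \<and> df b \<and> df d" "\<not> df (Deca a b)"
  "df (Pub a) \<longleftrightarrow> df a" "df (Priv a) \<longleftrightarrow> df a"
  "df (Pair a b) \<longleftrightarrow> df a \<and> df b" "\<not> df (Pi1 a)" "\<not> df (Pi2 a)"
  "df (Sign a b) \<longleftrightarrow> df a \<and> df b" "\<not> df (Check a b d)" "\<not> df (Retrieve a)"
  unfolding df_def by auto

lemma df_subst1:
  assumes "\<forall>v\<in>ran \<sigma>. df v"
  shows "df t \<Longrightarrow> df (subst1 \<sigma> t)"
proof (induction t)
  case (Var x)
  show ?case
  proof (cases "\<sigma> x")
    case None then show ?thesis by simp
  next
    case (Some v)
    then have "v \<in> ran \<sigma>" by (rule ranI)
    then show ?thesis using Some assms by simp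
  qed
qed simp_all

lemma df_fp:
  assumes "\<forall>v\<in>ran \<sigma>. df v"
  shows "df t \<Longrightarrow> df ((subst1 \<sigma> ^^ j) t)"
  by (induction j) (simp_all add: df_subst1[OF assms])

lemma public_set_args:
  "public \<phi> U \<Longrightarrow> args U \<noteq> [] \<Longrightarrow> length ys = length (args U) \<Longrightarrow> \<forall>y\<in>set ys. public \<phi> y \<Longrightarrow>
   public \<phi> (set_args U ys)"
  by (cases U) (auto simp: length_Suc_conv)

context ctx begin

definition OK :: "var \<Rightarrow> subst \<Rightarrow> bool" where
  "OK z \<sigma>' \<longleftrightarrow> \<sigma>' = \<sigma> \<or> (\<exists>w0. \<sigma>' = \<sigma>(z \<mapsto> w0) \<and> w0 \<in> FS \<and> nonrand w0 \<and> ded (n, \<sigma>) (app \<sigma> w0))"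

lemma df_app_atom: "args U = [] \<Longrightarrow> \<forall>u\<in>sub (app \<sigma> U). \<not> is_destructor u"
proof -
  assume a: "args U = []"
  have r: "\<forall>v\<in>ran \<sigma>. df v"
  proof
    fix v assume v: "v \<in> ran \<sigma>"
    show "df v" unfolding df_def
    proof
      fix u assume "u \<in> sub v"
      then have "u \<in> FS" using v unfolding frame_subterms_def subterms_sub by auto
      then show "\<not> is_destructor u" using bspec[OF wf_nod] by blast
    qed
  qed
  have "df U" using a by (cases U) auto
  then have "df (app \<sigma> U)" unfolding app_def using df_fp[OF r] by blast
  then show ?thesis unfolding df_def .
qed

lemma MLift:
  assumes zd: "z \<notin> dom \<sigma>" and zr: "\<forall>v\<in>ran \<sigma>. z \<notin> vars v"
  shows "public (n, \<sigma>) U \<Longrightarrow> vars U \<subseteq> dom \<sigma> \<Longrightarrow> rstep (repl s M (app \<sigma> U)) V \<Longrightarrow>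
    \<exists>\<sigma>' V'. OK z \<sigma>' \<and> public (n, \<sigma>) V' \<and> rstep (app \<sigma> U) (app \<sigma>' V') \<and> V = repl s M (app \<sigma>' V')"
proof (induction U arbitrary: V rule: measure_induct_rule[of size])
  case (less U)
  note pU = less.prems(1,2) and rs = less.prems(3)
  have appOK: "\<And>\<sigma>' t. OK z \<sigma>' \<Longrightarrow> vars t \<subseteq> dom \<sigma> \<Longrightarrow> app \<sigma>' t = app \<sigma> t"
    unfolding OK_def using app_upd[OF zd zr] by auto
  show ?case
  proof (cases "args U = []")
    case True
    then show ?thesis using destr_free_nf[OF df_app_atom[OF True] nfM] rs by blast
  next
    case aU: False
    let ?xs = "map (app \<sigma>) (args U)"
    let ?T = "app \<sigma> U"
    have T: "?T = set_args U ?xs" using app_args[OF aU] .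
    have aT: "args ?T = ?xs" using T args_set_args[of ?xs U] by simp
    have aT0: "args ?T \<noteq> []" using aT aU by simp
    have nT: "?T \<noteq> Nm s" using aT0 by auto
    have rT: "repl s M ?T = set_args U (map (repl s M) ?xs)"
      using repl_args[OF aT0] aT T set_args_set_args[of ?xs U "map (repl s M) ?xs"] by simp
    from rs have "rroot (repl s M ?T) V \<or> (\<exists>i<length (args (repl s M ?T)). \<exists>a'. rstep (args (repl s M ?T) ! i) a' \<and>
      V = set_args (repl s M ?T) ((args (repl s M ?T))[i := a']))" using rstep_char by blast
    then show ?thesis
    proof
      assume rr: "rroot (repl s M ?T) V"
      from KEY[OF pU rr] obtain u where u: "rroot ?T u" "V = repl s M u" "u = ok \<or> Good u" by blast
      have st: "rstep ?T u" using u(1) rstep_char by blast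
      have OKs: "OK z \<sigma>" unfolding OK_def by simp
      show ?thesis
      proof (cases "u = ok")
        case True
        have "app \<sigma> ok = ok" "public (n, \<sigma>) ok" by (simp_all add: ok_def app_hom)
        then show ?thesis using st u True OKs by metis
      next
        case False
        then obtain w where w: "u = app \<sigma> w" "(public (n, \<sigma>) w \<and> vars w \<subseteq> dom \<sigma>) \<or> (w \<in> FS \<and> nonrand w)"
          using u(3) unfolding Good_def by blast
        show ?thesis
        proof (cases "public (n, \<sigma>) w \<and> vars w \<subseteq> dom \<sigma>")
          case True then show ?thesis using st u w OKs by metis
        next
          case False
          then have fw: "w \<in> FS" "nonrand w" using w by auto
          have "ded (n, \<sigma>) ?T" using ded_pub[OF pU] .
          then have du: "ded (n, \<sigma>) (app \<sigma> w)" using ded_eq rroot_eqE[OF u(1)] w(1) by blast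
          have OKz: "OK z (\<sigma>(z \<mapsto> w))" unfolding OK_def using fw du by blast
          have ei: "ext n \<sigma> s M z w"
            by (rule ext.intro[OF ctx_inst]) (unfold_locales, use zd zr fw in auto)
          have "app (\<sigma>(z \<mapsto> w)) (Var z) = u" using ext.E5[OF ei] w(1) by simp
          moreover have "public (n, \<sigma>) (Var z)" by simp
          ultimately show ?thesis using st u OKz by metis
        qed
      qed
    next
      assume "\<exists>i<length (args (repl s M ?T)). \<exists>a'. rstep (args (repl s M ?T) ! i) a' \<and>
        V = set_args (repl s M ?T) ((args (repl s M ?T))[i := a'])"
      then obtain i a' where ia: "i < length (args (repl s M ?T))" "rstep (args (repl s M ?T) ! i) a'"
        "V = set_args (repl s M ?T) ((args (repl s M ?T))[i := a'])" by blast
      have arT: "args (repl s M ?T) = map (repl s M) ?xs" using args_repl[OF nT] aT by simp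
      have il: "i < length (args U)" using ia(1) arT by simp
      let ?Ui = "args U ! i"
      have um: "?Ui \<in> set (args U)" using il by simp
      have pUi: "public (n, \<sigma>) ?Ui" "vars ?Ui \<subseteq> dom \<sigma>" using public_arg[OF pU(1) um] vars_arg[OF um] pU(2) by auto
      have rsi: "rstep (repl s M (app \<sigma> ?Ui)) a'" using ia(2) arT il by simp
      from less.IH[OF args_size[OF um] pUi rsi] obtain \<sigma>' Vi' where
        IH: "OK z \<sigma>'" "public (n, \<sigma>) Vi'" "rstep (app \<sigma> ?Ui) (app \<sigma>' Vi')" "a' = repl s M (app \<sigma>' Vi')"
        by blast
      let ?ys = "(args U)[i := Vi']"
      let ?V' = "set_args U ?ys"
      have ly: "length ?ys = length (args U)" by simp
      have aV: "args ?V' = ?ys" using args_set_args[OF ly] .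
      have aV0: "args ?V' \<noteq> []" using aV aU by simp
      have mapeq: "map (app \<sigma>') (args U) = ?xs"
      proof (rule map_cong[OF refl])
        fix x assume "x \<in> set (args U)"
        then show "app \<sigma>' x = app \<sigma> x" using appOK[OF IH(1)] vars_arg pU(2) by blast
      qed
      have appV: "app \<sigma>' ?V' = set_args U (?xs[i := app \<sigma>' Vi'])"
      proof -
        have "app \<sigma>' ?V' = set_args ?V' (map (app \<sigma>') ?ys)" using app_args[OF aV0] aV by simp
        also have "\<dots> = set_args U (map (app \<sigma>') ?ys)" using set_args_set_args[OF ly] by simp
        also have "map (app \<sigma>') ?ys = ?xs[i := app \<sigma>' Vi']" by (simp only: map_update mapeq)
        finally show ?thesis .
      qed
      have st: "rstep ?T (app \<sigma>' ?V')"
      proof -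
        have "i < length (args ?T)" using aT il by simp
        moreover have "rstep (args ?T ! i) (app \<sigma>' Vi')" using IH(3) aT il by simp
        ultimately have "rstep ?T (set_args ?T ((args ?T)[i := app \<sigma>' Vi']))" by (rule rstep_arg)
        moreover have "set_args ?T ((args ?T)[i := app \<sigma>' Vi']) = set_args U (?xs[i := app \<sigma>' Vi'])"
          using T aT set_args_set_args[of ?xs U "?xs[i := app \<sigma>' Vi']"] by simp
        ultimately show ?thesis using appV by simp
      qed
      have Veq: "V = repl s M (app \<sigma>' ?V')"
      proof -
        let ?zs = "?xs[i := app \<sigma>' Vi']"
        have lz: "length ?zs = length (args U)" by simp
        have az: "args (set_args U ?zs) = ?zs" using args_set_args[OF lz] .
        have az0: "args (set_args U ?zs) \<noteq> []" using az aU by simp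
        have "repl s M (app \<sigma>' ?V') = set_args (set_args U ?zs) (map (repl s M) ?zs)"
          using appV repl_args[OF az0] az by simp
        also have "\<dots> = set_args U (map (repl s M) ?zs)" using set_args_set_args[OF lz] by simp
        also have "map (repl s M) ?zs = (map (repl s M) ?xs)[i := a']" using IH(4) by (simp add: map_update)
        finally have r1: "repl s M (app \<sigma>' ?V') = set_args U ((map (repl s M) ?xs)[i := a'])" .
        have "V = set_args (set_args U (map (repl s M) ?xs)) ((map (repl s M) ?xs)[i := a'])"
          using ia(3) arT rT by simp
        also have "\<dots> = set_args U ((map (repl s M) ?xs)[i := a'])"
          using set_args_set_args[of "map (repl s M) ?xs" U] by simp
        finally show ?thesis using r1 by simp
      qed
      have pV: "public (n, \<sigma>) ?V'"
      proof (rule public_set_args[OF pU(1) aU ly])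
        show "\<forall>y\<in>set ?ys. public (n, \<sigma>) y"
        proof
          fix y assume "y \<in> set ?ys"
          then have "y \<in> insert Vi' (set (args U))" using set_update_subset_insert by fast
          then show "public (n, \<sigma>) y" using IH(2) public_arg[OF pU(1)] by blast
        qed
      qed
      show ?thesis using IH(1) pV st Veq by blast
    qed
  qed
qed

end

context ctx begin

lemma main_ctx:
  assumes "vars U \<subseteq> dom \<sigma>" "public (n, \<sigma>) U" "rstep (repl s M (app \<sigma> U)) V"
  shows "\<exists>\<sigma>'. is_frame (n, \<sigma>') \<and> well_formed (n, \<sigma>') s \<and>
           (\<forall>x \<in> dom \<sigma>. app \<sigma>' (Var x) = app \<sigma> (Var x)) \<and>
           (\<forall>W. ded (n, \<sigma>) W \<longleftrightarrow> ded (n, \<sigma>') W) \<and>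
           (\<exists>V'. public (n, \<sigma>') V' \<and> V = repl s M (app \<sigma>' V') \<and>
                 rstep (app \<sigma> U) (app \<sigma>' V'))"
proof -
  have fin: "finite (dom \<sigma> \<union> (\<Union>v\<in>ran \<sigma>. vars v))"
    using fr finite_vars unfolding is_frame_def by (simp add: finite_ran)
  obtain z :: var where z: "z \<notin> dom \<sigma> \<union> (\<Union>v\<in>ran \<sigma>. vars v)"
    using ex_new_if_finite[OF infinite_UNIV_nat fin] by blast
  then have zd: "z \<notin> dom \<sigma>" and zr: "\<forall>v\<in>ran \<sigma>. z \<notin> vars v" by auto
  from MLift[OF zd zr assms(2,1,3)] obtain \<sigma>' V' where
    R: "OK z \<sigma>'" "public (n, \<sigma>) V'" "rstep (app \<sigma> U) (app \<sigma>' V')" "V = repl s M (app \<sigma>' V')"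
    by blast
  have pV: "public (n, \<sigma>') V'" using R(2) unfolding public_def by simp
  from R(1) consider "\<sigma>' = \<sigma>" | w0 where "\<sigma>' = \<sigma>(z \<mapsto> w0)" "w0 \<in> FS"
      "nonrand w0" "ded (n, \<sigma>) (app \<sigma> w0)"
    unfolding OK_def by blast
  then show ?thesis
  proof cases
    case 1
    then show ?thesis using fr wf R pV by blast
  next
    case 2
    have E: "ext n \<sigma> s M z w0"
      by (rule ext.intro[OF ctx_inst]) (unfold_locales, use zd zr 2 in auto)
    have a: "is_frame (n, \<sigma>')" using ext.E6[OF E] 2 by simp
    have b: "well_formed (n, \<sigma>') s" using ext.E7[OF E] 2 by simp
    have c: "\<forall>x \<in> dom \<sigma>. app \<sigma>' (Var x) = app \<sigma> (Var x)"
    proof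
      fix x assume "x \<in> dom \<sigma>"
      then show "app \<sigma>' (Var x) = app \<sigma> (Var x)" using ext.E4d[OF E, of "Var x"] 2 by simp
    qed
    have d: "\<forall>W. ded (n, \<sigma>) W \<longleftrightarrow> ded (n, \<sigma>') W" using ext.E8[OF E] 2 by simp
    show ?thesis using a b c d R pV by blast
  qed
qed

end

theorem lemma2p8:
  fixes n :: "name set" and \<sigma> :: subst and s :: name and U M V :: trm
  assumes "is_frame (n, \<sigma>)"
    and "s \<in> n"
    and "well_formed (n, \<sigma>) s"
    and "\<not> ded (n, \<sigma>) (Nm s)"
    and "vars U \<subseteq> dom \<sigma>"
    and "closed M" and "normal_form M"
    and "public (n, \<sigma>) U" and "public (n, \<sigma>) M"
    and "rstep (repl s M (app \<sigma> U)) V"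
  shows "\<exists>\<sigma>'. is_frame (n, \<sigma>') \<and> well_formed (n, \<sigma>') s \<and>
           (\<forall>x \<in> dom \<sigma>. app \<sigma>' (Var x) = app \<sigma> (Var x)) \<and>
           (\<forall>W. ded (n, \<sigma>) W \<longleftrightarrow> ded (n, \<sigma>') W) \<and>
           (\<exists>V'. public (n, \<sigma>') V' \<and> V = repl s M (app \<sigma>' V') \<and>
                 rstep (app \<sigma> U) (app \<sigma>' V'))"
proof -
  have C: "ctx n \<sigma> s M" by (rule ctx.intro) (use assms in simp_all)
  show ?thesis using ctx.main_ctx[OF C assms(5,8,10)] .
qed


end
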